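(* (1) $\mathbb{S}_1^*=K^*(1+F)^*\simeq K^*\times\mathrm{GL}_\infty(K)$. (2) $Z(\mathbb{S}_1^* )=K^*$ and $Z((1+F)^* )=\{1\}$. (3) $\mathrm{Inn}(\mathbb{S}_1)\simeq\mathrm{GL}_\infty(K)$ via $\omega_u\leftrightarrow u$ for $u\in(1+F)^*$.
   Context: $K$ is a field of characteristic zero. $\mathbb{S}_1=K\langle x,y\mid yx=1\rangle$; $\mathbb{S}_1^*$ is its group of units and $Z(G)$ denotes the centre of a group $G$. For $i,j\in\mathbb{N}$, $E_{ij}:=x^iy^j-x^{i+1}y^{j+1}$, and $F=\bigoplus_{i,j}KE_{ij}$, an ideal isomorphic to the algebra $M_\infty(K)=\bigcup_{d\ge1}M_d(K)$ of $\mathbb{N}\times\mathbb{N}$ matrices with finitely many nonzero entries. $(1+F)^*$ is the group of units of the monoid $1+F$, and $\mathrm{GL}_\infty(K)$ is the group of units of $1+M_\infty(K)$. $\mathrm{Inn}(\mathbb{S}_1)=\{\omega_u:a\mapsto uau^{-1}\mid u\in\mathbb{S}_1^*\}$. *)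

theory Defs
  imports "HOL-Algebra.Group" "HOL-Algebra.Coset" "HOL-Library.FuncSet"
begin

text \<open>S_1 has the K-basis of monomials x^i y^j (i, j natural numbers).
An element of S_1 is represented by its finitely supported coefficient
function c :: nat \<times> nat \<Rightarrow> K, where c (i,j) is the coefficient of x^i y^j.
Since y^j x^k = x^(k-j) if j \<le> k and y^(j-k) otherwise, the product
of monomials is x^i y^j * x^k y^l = x^(i+k-j) y^l (j \<le> k) resp.
x^i y^(j-k+l) (k < j).\<close>

definition mon_mult :: "nat \<times> nat \<Rightarrow> nat \<times> nat \<Rightarrow> nat \<times> nat" where
  "mon_mult p q = (case p of (i, j) \<Rightarrow> case q of (k, l) \<Rightarrow>
     if j \<le> k then (i + k - j, l) else (i, j - k + l))"

definition supp2 :: "(nat \<times> nat \<Rightarrow> 'a::zero) \<Rightarrow> (nat \<times> nat) set" where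
  "supp2 f = {p. f p \<noteq> 0}"

definition s1_mult :: "(nat \<times> nat \<Rightarrow> 'a::field) \<Rightarrow> (nat \<times> nat \<Rightarrow> 'a) \<Rightarrow> (nat \<times> nat \<Rightarrow> 'a)" where
  "s1_mult f g = (\<lambda>m. \<Sum>(p, q) \<in> {(p, q). p \<in> supp2 f \<and> q \<in> supp2 g \<and> mon_mult p q = m}. f p * g q)"

definition monom_xy :: "nat \<Rightarrow> nat \<Rightarrow> (nat \<times> nat \<Rightarrow> 'a::field)" where
  "monom_xy i j = (\<lambda>p. if p = (i, j) then 1 else 0)"

definition scal :: "'a::field \<Rightarrow> (nat \<times> nat \<Rightarrow> 'a)" where
  "scal c = (\<lambda>p. if p = (0, 0) then c else 0)"

definition S1 :: "(nat \<times> nat \<Rightarrow> 'a::field) monoid" where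
  "S1 = \<lparr>carrier = {f. finite (supp2 f)}, mult = s1_mult, one = monom_xy 0 0\<rparr>"

definition Kstar_in_S1 :: "(nat \<times> nat \<Rightarrow> 'a::field) set" where
  "Kstar_in_S1 = {scal c | c. c \<noteq> 0}"

definition Emat :: "nat \<Rightarrow> nat \<Rightarrow> (nat \<times> nat \<Rightarrow> 'a::field)" where
  "Emat i j = (\<lambda>p. monom_xy i j p - monom_xy (Suc i) (Suc j) p)"

definition Fideal :: "(nat \<times> nat \<Rightarrow> 'a::field) set" where
  "Fideal = {(\<lambda>p. \<Sum>q\<in>A. c q * Emat (fst q) (snd q) p) | A c. finite A}"

definition onePlusF :: "(nat \<times> nat \<Rightarrow> 'a::field) monoid" where
  "onePlusF = S1\<lparr>carrier := {(\<lambda>p. monom_xy 0 0 p + f p) | f. f \<in> Fideal}\<rparr>"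

text \<open>In such a matrix
every row has only finitely many nonzero entries, so the product below
(sum over the nonzero entries of row i of A) is the usual matrix product.\<close>

definition idmat :: "nat \<times> nat \<Rightarrow> 'a::field" where
  "idmat = (\<lambda>(i, j). if i = j then 1 else 0)"

definition matmult :: "(nat \<times> nat \<Rightarrow> 'a::field) \<Rightarrow> (nat \<times> nat \<Rightarrow> 'a) \<Rightarrow> (nat \<times> nat \<Rightarrow> 'a)" where
  "matmult A B = (\<lambda>(i, k). \<Sum>j \<in> {j. A (i, j) \<noteq> 0}. A (i, j) * B (j, k))"

definition onePlusMinf :: "(nat \<times> nat \<Rightarrow> 'a::field) monoid" where
  "onePlusMinf = \<lparr>carrier = {A. finite {p. A p \<noteq> idmat p}}, mult = matmult, one = idmat\<rparr>"

definition GL_inf :: "(nat \<times> nat \<Rightarrow> 'a::field) monoid" where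
  "GL_inf = units_of onePlusMinf"

definition Kmult :: "'a::field monoid" where
  "Kmult = \<lparr>carrier = {c. c \<noteq> 0}, mult = (*), one = 1\<rparr>"

definition group_center :: "('a, 'b) monoid_scheme \<Rightarrow> 'a set" where
  "group_center G = {z \<in> carrier G. \<forall>g \<in> carrier G. z \<otimes>\<^bsub>G\<^esub> g = g \<otimes>\<^bsub>G\<^esub> z}"

definition omega :: "(nat \<times> nat \<Rightarrow> 'a::field) \<Rightarrow> ((nat \<times> nat \<Rightarrow> 'a) \<Rightarrow> (nat \<times> nat \<Rightarrow> 'a))" where
  "omega u = (\<lambda>a \<in> carrier S1. u \<otimes>\<^bsub>S1\<^esub> a \<otimes>\<^bsub>S1\<^esub> inv\<^bsub>S1\<^esub> u)"

definition Inn_S1 :: "((nat \<times> nat \<Rightarrow> 'a::field) \<Rightarrow> (nat \<times> nat \<Rightarrow> 'a)) monoid" where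
  "Inn_S1 = \<lparr>carrier = omega ` Units S1,
             mult = (\<lambda>f g. \<lambda>a \<in> carrier S1. f (g a)),
             one = (\<lambda>a \<in> carrier S1. a)\<rparr>"

end

theory Submission
  imports Defs
begin

lemma carrier_S1: "carrier S1 = {f. finite (supp2 f)}" by (simp add: S1_def)
lemma mult_S1[simp]: "mult S1 = s1_mult" by (simp add: S1_def)
lemma one_S1[simp]: "one S1 = monom_xy 0 0" by (simp add: S1_def)

lemma mon_mult_assoc: "mon_mult (mon_mult p q) r = mon_mult p (mon_mult q r)"
  by (cases p; cases q; cases r) (auto simp: mon_mult_def)
lemma mon_mult_one_left[simp]: "mon_mult (0,0) q = q"
  by (cases q) (auto simp: mon_mult_def)
lemma mon_mult_one_right[simp]: "mon_mult p (0,0) = p"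
  by (cases p) (auto simp: mon_mult_def)

lemma mult_superset:
  fixes f g :: "nat \<times> nat \<Rightarrow> 'a::field"
  assumes "finite A" "finite B" "supp2 f \<subseteq> A" "supp2 g \<subseteq> B"
  shows "s1_mult f g m = (\<Sum>p\<in>A. \<Sum>q\<in>B. if mon_mult p q = m then f p * g q else 0)"
proof -
  let ?T = "{(p, q). p \<in> supp2 f \<and> q \<in> supp2 g \<and> mon_mult p q = m}"
  have "s1_mult f g m = (\<Sum>(p,q)\<in>?T. f p * g q)" by (simp add: s1_mult_def)
  also have "\<dots> = (\<Sum>(p,q)\<in>A\<times>B. if mon_mult p q = m then f p * g q else 0)"
    apply (rule sum.mono_neutral_cong_left)
    using assms by (auto simp: supp2_def split: if_splits)
  also have "\<dots> = (\<Sum>p\<in>A. \<Sum>q\<in>B. if mon_mult p q = m then f p * g q else 0)"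
    by (simp add: sum.cartesian_product)
  finally show ?thesis .
qed

lemma supp_mult:
  "supp2 (s1_mult f g) \<subseteq> (\<lambda>(p,q). mon_mult p q) ` (supp2 f \<times> supp2 g)"
proof
  fix m assume "m \<in> supp2 (s1_mult f g)"
  hence "(\<Sum>(p, q) \<in> {(p, q). p \<in> supp2 f \<and> q \<in> supp2 g \<and> mon_mult p q = m}. f p * g q) \<noteq> 0"
    by (simp add: supp2_def s1_mult_def)
  hence "{(p, q). p \<in> supp2 f \<and> q \<in> supp2 g \<and> mon_mult p q = m} \<noteq> {}"
    by (intro notI) simp
  then obtain p q where "p \<in> supp2 f" "q \<in> supp2 g" "mon_mult p q = m"
    by blast
  thus "m \<in> (\<lambda>(p,q). mon_mult p q) ` (supp2 f \<times> supp2 g)" by force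
qed

lemma finite_supp_mult:
  "finite (supp2 f) \<Longrightarrow> finite (supp2 g) \<Longrightarrow> finite (supp2 (s1_mult f g))"
  by (rule finite_subset[OF supp_mult]) auto

lemma collapse:
  fixes X :: "'b \<Rightarrow> 'c \<Rightarrow> 'a::comm_ring_1"
  assumes "finite A" "finite B" "finite C" "\<And>p q. p \<in> A \<Longrightarrow> q \<in> B \<Longrightarrow> \<phi> p q \<in> C"
  shows "(\<Sum>s\<in>C. G s * (\<Sum>p\<in>A. \<Sum>q\<in>B. if \<phi> p q = s then X p q else 0))
       = (\<Sum>p\<in>A. \<Sum>q\<in>B. G (\<phi> p q) * X p q)"
proof -
  have "(\<Sum>s\<in>C. G s * (\<Sum>p\<in>A. \<Sum>q\<in>B. if \<phi> p q = s then X p q else 0))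
      = (\<Sum>s\<in>C. \<Sum>p\<in>A. \<Sum>q\<in>B. if \<phi> p q = s then G s * X p q else 0)"
    unfolding sum_distrib_left by (intro sum.cong refl) simp
  also have "\<dots> = (\<Sum>p\<in>A. \<Sum>s\<in>C. \<Sum>q\<in>B. if \<phi> p q = s then G s * X p q else 0)"
    by (rule sum.swap)
  also have "\<dots> = (\<Sum>p\<in>A. \<Sum>q\<in>B. \<Sum>s\<in>C. if \<phi> p q = s then G s * X p q else 0)"
    by (rule sum.cong[OF refl], rule sum.swap)
  also have "\<dots> = (\<Sum>p\<in>A. \<Sum>q\<in>B. G (\<phi> p q) * X p q)"
    using assms by (simp add: sum.delta)
  finally show ?thesis .
qed

lemma s1_assoc:
  fixes f g h :: "nat \<times> nat \<Rightarrow> 'a::field"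
  assumes f: "finite (supp2 f)" and g: "finite (supp2 g)" and h: "finite (supp2 h)"
  shows "s1_mult (s1_mult f g) h = s1_mult f (s1_mult g h)"
proof
  fix m
  let ?A = "supp2 f" and ?B = "supp2 g" and ?D = "supp2 h"
  let ?C = "(\<lambda>(p,q). mon_mult p q) ` (?A \<times> ?B)"
  let ?C' = "(\<lambda>(p,q). mon_mult p q) ` (?B \<times> ?D)"
  have fC: "finite ?C" "finite ?C'" using f g h by auto
  have "s1_mult (s1_mult f g) h m
      = (\<Sum>s\<in>?C. \<Sum>r\<in>?D. if mon_mult s r = m then s1_mult f g s * h r else 0)"
    by (rule mult_superset) (use f g h fC supp_mult in auto)
  also have "\<dots> = (\<Sum>s\<in>?C. (\<Sum>r\<in>?D. if mon_mult s r = m then h r else 0) * s1_mult f g s)"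
    unfolding sum_distrib_right by (intro sum.cong refl) simp
  also have "\<dots> = (\<Sum>s\<in>?C. (\<Sum>r\<in>?D. if mon_mult s r = m then h r else 0) *
        (\<Sum>p\<in>?A. \<Sum>q\<in>?B. if mon_mult p q = s then f p * g q else 0))"
    by (rule sum.cong[OF refl], subst mult_superset[OF f g], auto)
  also have "\<dots> = (\<Sum>p\<in>?A. \<Sum>q\<in>?B. (\<Sum>r\<in>?D. if mon_mult (mon_mult p q) r = m then h r else 0) * (f p * g q))"
    by (rule collapse) (use f g fC in auto)
  also have "\<dots> = (\<Sum>p\<in>?A. \<Sum>q\<in>?B. \<Sum>r\<in>?D. if mon_mult p (mon_mult q r) = m then f p * g q * h r else 0)"
    unfolding sum_distrib_right by (intro sum.cong refl) (simp add: mon_mult_assoc mult_ac)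
  finally have L: "s1_mult (s1_mult f g) h m = \<dots>" .
  have "s1_mult f (s1_mult g h) m
      = (\<Sum>p\<in>?A. \<Sum>s\<in>?C'. if mon_mult p s = m then f p * s1_mult g h s else 0)"
    by (rule mult_superset) (use f g h fC supp_mult in auto)
  also have "\<dots> = (\<Sum>p\<in>?A. f p * (\<Sum>s\<in>?C'. (if mon_mult p s = m then 1 else 0) * s1_mult g h s))"
    unfolding sum_distrib_left by (intro sum.cong refl) simp
  also have "\<dots> = (\<Sum>p\<in>?A. f p * (\<Sum>s\<in>?C'. (if mon_mult p s = m then 1 else 0) *
        (\<Sum>q\<in>?B. \<Sum>r\<in>?D. if mon_mult q r = s then g q * h r else 0)))"
  proof -
    have gh: "\<And>s. s1_mult g h s = (\<Sum>q\<in>?B. \<Sum>r\<in>?D. if mon_mult q r = s then g q * h r else 0)"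
      by (rule mult_superset[OF g h]) auto
    show ?thesis by (simp only: gh)
  qed
  also have "\<dots> = (\<Sum>p\<in>?A. f p * (\<Sum>q\<in>?B. \<Sum>r\<in>?D. (if mon_mult p (mon_mult q r) = m then 1 else 0) * (g q * h r)))"
  proof -
    have col: "\<And>p. (\<Sum>s\<in>?C'. (if mon_mult p s = m then 1 else 0) *
        (\<Sum>q\<in>?B. \<Sum>r\<in>?D. if mon_mult q r = s then g q * h r else 0))
      = (\<Sum>q\<in>?B. \<Sum>r\<in>?D. (if mon_mult p (mon_mult q r) = m then 1 else 0) * (g q * h r))"
      by (rule collapse) (use g h fC in auto)
    show ?thesis by (simp only: col)
  qed
  also have "\<dots> = (\<Sum>p\<in>?A. \<Sum>q\<in>?B. \<Sum>r\<in>?D. if mon_mult p (mon_mult q r) = m then f p * g q * h r else 0)"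
    unfolding sum_distrib_left by (intro sum.cong refl) (simp add: mult.assoc)
  finally show "s1_mult (s1_mult f g) h m = s1_mult f (s1_mult g h) m" using L by simp
qed


lemma scal_apply: "scal c p = (if p = (0,0) then c else 0)" by (simp add: scal_def)
lemma scal_00[simp]: "scal c (0,0) = c" by (simp add: scal_def)

lemma scal_mult:
  fixes x :: "nat \<times> nat \<Rightarrow> 'a::field"
  assumes "finite (supp2 x)"
  shows "s1_mult (scal c) x = (\<lambda>p. c * x p)"
proof (rule ext)
  fix m
  have "s1_mult (scal c) x m = (\<Sum>p\<in>{(0,0)}. \<Sum>q\<in>supp2 x. if mon_mult p q = m then scal c p * x q else 0)"
    by (rule mult_superset) (use assms in \<open>auto simp: supp2_def scal_def split: if_splits\<close>)
  also have "\<dots> = (\<Sum>q\<in>supp2 x. if q = m then c * x q else 0)" by (simp add: scal_apply cong: if_cong)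
  also have "\<dots> = c * x m" using assms by (simp add: sum.delta) (simp add: supp2_def)
  finally show "s1_mult (scal c) x m = c * x m" .
qed

lemma mult_scal:
  fixes x :: "nat \<times> nat \<Rightarrow> 'a::field"
  assumes "finite (supp2 x)"
  shows "s1_mult x (scal c) = (\<lambda>p. c * x p)"
proof (rule ext)
  fix m
  have "s1_mult x (scal c) m = (\<Sum>q\<in>supp2 x. \<Sum>p\<in>{(0,0)}. if mon_mult q p = m then x q * scal c p else 0)"
    by (rule mult_superset) (use assms in \<open>auto simp: supp2_def scal_def split: if_splits\<close>)
  also have "\<dots> = (\<Sum>q\<in>supp2 x. if q = m then c * x q else 0)" by (auto simp: scal_apply mult.commute intro!: sum.cong)
  also have "\<dots> = c * x m" using assms by (simp add: sum.delta) (simp add: supp2_def)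
  finally show "s1_mult x (scal c) m = c * x m" .
qed

lemma monom00_scal: "monom_xy 0 0 = scal 1"
  by (auto simp: monom_xy_def scal_def)

lemma finite_supp_scal[simp]: "finite (supp2 (scal c))"
  by (rule finite_subset[of _ "{(0,0)}"]) (auto simp: supp2_def scal_def split: if_splits)

lemma monoid_S1: "monoid (S1 :: (nat \<times> nat \<Rightarrow> 'a::field) monoid)"
  by (rule monoidI) (auto simp: carrier_S1 finite_supp_mult s1_assoc monom00_scal scal_mult mult_scal)

interpretation S1m: monoid "S1 :: (nat \<times> nat \<Rightarrow> 'a::field) monoid"
  by (rule monoid_S1)

definition ind :: "nat \<times> nat \<Rightarrow> nat \<times> nat \<Rightarrow> 'a::field" where
  "ind p q = (if fst p \<le> fst q \<and> snd p \<le> snd q \<and> fst q - fst p = snd q - snd p then 1 else 0)"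

definition rho :: "(nat \<times> nat \<Rightarrow> 'a::field) \<Rightarrow> (nat \<times> nat \<Rightarrow> 'a)" where
  "rho f = (\<lambda>(a,b). \<Sum>p\<in>supp2 f. f p * ind p (a,b))"

lemma rho_superset:
  "finite A \<Longrightarrow> supp2 f \<subseteq> A \<Longrightarrow> rho f (a,b) = (\<Sum>p\<in>A. f p * ind p (a,b))"
  unfolding rho_def by (auto intro!: sum.mono_neutral_left simp: supp2_def)

lemma matmult_superset:
  "finite S \<Longrightarrow> (\<And>j. A (i,j) \<noteq> 0 \<Longrightarrow> j \<in> S) \<Longrightarrow> matmult A B (i,k) = (\<Sum>j\<in>S. A (i,j) * B (j,k))"
  unfolding matmult_def by (auto intro!: sum.mono_neutral_left)

lemma ind_nz: "ind (i,j) (a,b) \<noteq> (0::'a::field) \<longleftrightarrow> i \<le> a \<and> b = a - i + j"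
  by (auto simp: ind_def)

lemma ind_ij: "ind (i,j) (a,b) = (if b = a - i + j \<and> i \<le> a then 1 else (0::'a::field))"
proof -
  have "(i \<le> a \<and> j \<le> b \<and> a - i = b - j) \<longleftrightarrow> (b = a - i + j \<and> i \<le> a)" by linarith
  thus ?thesis unfolding ind_def by simp
qed
lemma mon_mult_cond: "(i \<le> a \<and> k \<le> a - i + j \<and> l \<le> c \<and> a - i + j - k = c - l) \<longleftrightarrow>
  (fst (mon_mult (i,j) (k,l)) \<le> a \<and> snd (mon_mult (i,j) (k,l)) \<le> c \<and> a - fst (mon_mult (i,j) (k,l)) = c - snd (mon_mult (i,j) (k,l)))"
  by (cases "j \<le> k") (simp_all add: mon_mult_def, linarith+)

lemma ind_comp:
  assumes "finite S" "{..a+j} \<subseteq> S"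
  shows "(\<Sum>b\<in>S. ind (i,j) (a,b) * ind q (b,c)) = (ind (mon_mult (i,j) q) (a,c) :: 'a::field)"
proof -
  have "(\<Sum>b\<in>S. ind (i,j) (a,b) * ind q (b,c)) = (\<Sum>b\<in>S. if b = a - i + j then (if i \<le> a then (ind q (b,c)::'a) else 0) else 0)"
    by (intro sum.cong refl) (simp add: ind_ij)
  also have "\<dots> = (if i \<le> a then ind q (a - i + j, c) else 0)"
  proof -
    have "a - i + j \<in> S" using assms by auto
    thus ?thesis using assms(1) by (simp add: sum.delta)
  qed
  also have "\<dots> = ind (mon_mult (i,j) q) (a,c)"
  proof -
    obtain k l where q: "q = (k,l)" by fastforce
    have "(if i \<le> a then ind (k,l) (a - i + j, c) else 0)
       = (if (i \<le> a \<and> k \<le> a - i + j \<and> l \<le> c \<and> a - i + j - k = c - l) then 1 else (0::'a))"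
      by (simp add: ind_def)
    also have "\<dots> = ind (mon_mult (i,j) (k,l)) (a,c)"
      unfolding ind_def mon_mult_cond by simp
    finally show ?thesis unfolding q .
  qed
  finally show ?thesis .
qed

lemma rho_row:
  assumes "finite (supp2 f)" "rho f (a,b) \<noteq> 0"
  shows "b \<le> a + (\<Sum>p\<in>supp2 f. snd p)"
proof -
  from assms obtain p where p: "p \<in> supp2 f" "ind p (a,b) \<noteq> (0::'a)"
    unfolding rho_def by (auto elim: sum.not_neutral_contains_not_neutral)
  have "snd p \<le> (\<Sum>p\<in>supp2 f. snd p)" by (rule member_le_sum) (use assms p in auto)
  with p(2) show ?thesis by (cases p) (auto simp: ind_def split: if_splits)
qed

lemma rho_mult:
  fixes f g :: "nat \<times> nat \<Rightarrow> 'a::field"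
  assumes f: "finite (supp2 f)" and g: "finite (supp2 g)"
  shows "rho (s1_mult f g) = matmult (rho f) (rho g)"
proof (rule ext, clarify)
  fix a c
  let ?A = "supp2 f" and ?B = "supp2 g"
  let ?C = "(\<lambda>(p,q). mon_mult p q) ` (?A \<times> ?B)"
  let ?J = "\<Sum>p\<in>?A. snd p"
  let ?S = "{..a + ?J}"
  have fC: "finite ?C" using f g by auto
  have "rho (s1_mult f g) (a,c) = (\<Sum>s\<in>?C. s1_mult f g s * ind s (a,c))"
    by (rule rho_superset) (use fC supp_mult in auto)
  also have "\<dots> = (\<Sum>s\<in>?C. ind s (a,c) * (\<Sum>p\<in>?A. \<Sum>q\<in>?B. if mon_mult p q = s then f p * g q else 0))"
    by (intro sum.cong refl) (simp add: mult_superset[OF f g] mult.commute)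
  also have "\<dots> = (\<Sum>p\<in>?A. \<Sum>q\<in>?B. ind (mon_mult p q) (a,c) * (f p * g q))"
    by (rule collapse) (use f g fC in auto)
  finally have L: "rho (s1_mult f g) (a,c) = \<dots>" .
  have "matmult (rho f) (rho g) (a,c) = (\<Sum>b\<in>?S. rho f (a,b) * rho g (b,c))"
    by (rule matmult_superset) (use rho_row[OF f] in auto)
  also have "\<dots> = (\<Sum>b\<in>?S. (\<Sum>p\<in>?A. f p * ind p (a,b)) * (\<Sum>q\<in>?B. g q * ind q (b,c)))"
    by (simp add: rho_superset[OF f] rho_superset[OF g])
  also have "\<dots> = (\<Sum>b\<in>?S. \<Sum>p\<in>?A. \<Sum>q\<in>?B. (f p * g q) * (ind p (a,b) * ind q (b,c)))"
    unfolding sum_product by (intro sum.cong refl) (simp add: mult_ac)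
  also have "\<dots> = (\<Sum>p\<in>?A. \<Sum>b\<in>?S. \<Sum>q\<in>?B. (f p * g q) * (ind p (a,b) * ind q (b,c)))"
    by (rule sum.swap)
  also have "\<dots> = (\<Sum>p\<in>?A. \<Sum>q\<in>?B. \<Sum>b\<in>?S. (f p * g q) * (ind p (a,b) * ind q (b,c)))"
    by (intro sum.cong refl, rule sum.swap)
  also have "\<dots> = (\<Sum>p\<in>?A. \<Sum>q\<in>?B. (f p * g q) * (\<Sum>b\<in>?S. ind p (a,b) * ind q (b,c)))"
    by (simp add: sum_distrib_left)
  also have "\<dots> = (\<Sum>p\<in>?A. \<Sum>q\<in>?B. (f p * g q) * ind (mon_mult p q) (a,c))"
  proof (intro sum.cong refl)
    fix p q assume p: "p \<in> ?A"
    have "snd p \<le> ?J" by (rule member_le_sum) (use f p in auto)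
    hence "{..a + snd p} \<subseteq> ?S" by auto
    hence "(\<Sum>b\<in>?S. ind p (a,b) * ind q (b,c)) = (ind (mon_mult p q) (a,c) :: 'a)"
      using ind_comp[of ?S a "snd p" "fst p" q c] by simp
    thus "(f p * g q) * (\<Sum>b\<in>?S. ind p (a,b) * ind q (b,c)) = (f p * g q) * ind (mon_mult p q) (a,c)"
      by simp
  qed
  finally show "rho (s1_mult f g) (a,c) = matmult (rho f) (rho g) (a,c)" using L by (simp add: mult_ac)
qed

lemma ind_step: "ind p (Suc a, Suc b) = ind p (a,b) + (if p = (Suc a, Suc b) then 1 else (0::'a::field))"
  by (cases p) (auto simp: ind_def)

lemma ind_edge1: "ind p (0, b) = (if p = (0, b) then 1 else (0::'a::field))"
  by (cases p) (auto simp: ind_def)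
lemma ind_edge2: "ind p (a, 0) = (if p = (a, 0) then 1 else (0::'a::field))"
  by (cases p) (auto simp: ind_def)

lemma sum_delta_mult:
  "finite S \<Longrightarrow> (\<Sum>p\<in>S. f p * (if p = a then 1 else 0)) = (if a \<in> S then f a else (0::'a::comm_ring_1))"
proof -
  assume "finite S"
  have "(\<Sum>p\<in>S. f p * (if p = a then 1 else 0)) = (\<Sum>p\<in>S. if p = a then f p else 0)"
    by (rule sum.cong) auto
  thus ?thesis using \<open>finite S\<close> by (simp add: sum.delta)
qed

lemma rho_step:
  assumes "finite (supp2 f)"
  shows "rho f (Suc a, Suc b) = rho f (a,b) + f (Suc a, Suc b)"
proof -
  have "rho f (Suc a, Suc b) = (\<Sum>p\<in>supp2 f. f p * ind p (a,b) + f p * (if p = (Suc a, Suc b) then 1 else 0))"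
    unfolding rho_def by (simp only: ind_step distrib_left split_conv)
  also have "\<dots> = rho f (a,b) + (\<Sum>p\<in>supp2 f. f p * (if p = (Suc a, Suc b) then 1 else 0))"
    by (simp only: sum.distrib rho_def split_conv)
  also have "\<dots> = rho f (a,b) + f (Suc a, Suc b)"
    using assms by (simp only: sum_delta_mult) (auto simp: supp2_def)
  finally show ?thesis .
qed

lemma rho_edge1: "finite (supp2 f) \<Longrightarrow> rho f (0,b) = f (0,b)"
  unfolding rho_def by (simp only: ind_edge1 split_conv sum_delta_mult) (auto simp: supp2_def)
lemma rho_edge2: "finite (supp2 f) \<Longrightarrow> rho f (a,0) = f (a,0)"
  unfolding rho_def by (simp only: ind_edge2 split_conv sum_delta_mult) (auto simp: supp2_def)

lemma rho_inj:
  assumes "finite (supp2 f)" "finite (supp2 g)" "rho f = rho g"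
  shows "f = g"
proof (rule ext, clarify)
  fix a b
  show "f (a,b) = g (a,b)"
  proof (cases a)
    case 0
    have "f (0,b) = rho f (0,b)" using rho_edge1[OF assms(1)] by simp
    also have "\<dots> = rho g (0,b)" using assms(3) by simp
    also have "\<dots> = g (0,b)" using rho_edge1[OF assms(2)] by simp
    finally show ?thesis using 0 by simp
  next
    case (Suc a')
    show ?thesis
    proof (cases b)
      case 0
      have "f (a,0) = rho f (a,0)" using rho_edge2[OF assms(1)] by simp
      also have "\<dots> = rho g (a,0)" using assms(3) by simp
      also have "\<dots> = g (a,0)" using rho_edge2[OF assms(2)] by simp
      finally show ?thesis using 0 by simp
    next
      case (Suc b')
      have "f (Suc a', Suc b') = rho f (Suc a', Suc b') - rho f (a',b')"
        using rho_step[OF assms(1), of a' b'] by simp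
      also have "\<dots> = rho g (Suc a', Suc b') - rho g (a',b')" using assms(3) by simp
      also have "\<dots> = g (Suc a', Suc b')"
        using rho_step[OF assms(2), of a' b'] by simp
      finally show ?thesis using Suc \<open>a = Suc a'\<close> by simp
    qed
  qed
qed


section \<open>Linearity of rho, the ideal F and 1+F\<close>

lemma supp2_add: "supp2 (\<lambda>p. f p + g p) \<subseteq> supp2 f \<union> supp2 (g :: _ \<Rightarrow> 'a::field)" by (auto simp: supp2_def)
lemma supp2_smult: "supp2 (\<lambda>p. c * f p) \<subseteq> supp2 (f :: _ \<Rightarrow> 'a::field)" by (auto simp: supp2_def)

lemma rho_add:
  fixes f g :: "nat \<times> nat \<Rightarrow> 'a::field"
  assumes "finite (supp2 f)" "finite (supp2 g)"
  shows "rho (\<lambda>p. f p + g p) = (\<lambda>q. rho f q + rho g q)"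
proof (rule ext, clarify)
  fix a b
  let ?A = "supp2 f \<union> supp2 g"
  have fA: "finite ?A" using assms by auto
  have "rho (\<lambda>p. f p + g p) (a,b) = (\<Sum>p\<in>?A. (f p + g p) * ind p (a,b))"
    using rho_superset[OF fA supp2_add[of f g]] by simp
  also have "\<dots> = (\<Sum>p\<in>?A. f p * ind p (a,b)) + (\<Sum>p\<in>?A. g p * ind p (a,b))"
    by (simp add: distrib_right sum.distrib)
  also have "\<dots> = rho f (a,b) + rho g (a,b)"
    using rho_superset[OF fA, of f a b] rho_superset[OF fA, of g a b] by auto
  finally show "rho (\<lambda>p. f p + g p) (a,b) = rho f (a,b) + rho g (a,b)" .
qed

lemma rho_smult:
  fixes f :: "nat \<times> nat \<Rightarrow> 'a::field"
  assumes "finite (supp2 f)"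
  shows "rho (\<lambda>p. c * f p) = (\<lambda>q. c * rho f q)"
proof (rule ext, clarify)
  fix a b
  have "rho (\<lambda>p. c * f p) (a,b) = (\<Sum>p\<in>supp2 f. (c * f p) * ind p (a,b))"
    using rho_superset[OF assms supp2_smult[of c f]] by simp
  also have "\<dots> = c * rho f (a,b)"
    by (simp add: rho_def sum_distrib_left mult.assoc)
  finally show "rho (\<lambda>p. c * f p) (a,b) = c * rho f (a,b)" .
qed

lemma ind_E: "ind (i,j) (a,b) - ind (Suc i, Suc j) (a,b) = (if (a,b) = (i,j) then 1 else (0::'a::field))"
proof (cases "a = i")
  case True thus ?thesis by (auto simp: ind_ij)
next
  case False
  show ?thesis
  proof (cases "a < i")
    case True thus ?thesis by (auto simp: ind_ij)
  next
    case False
    with \<open>a \<noteq> i\<close> have "Suc i \<le> a" by simp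
    hence "a - Suc i + Suc j = a - i + j" by simp
    thus ?thesis using \<open>Suc i \<le> a\<close> by (auto simp: ind_ij)
  qed
qed

lemma supp_Emat: "supp2 (Emat i j) \<subseteq> {(i,j), (Suc i, Suc j)}"
  by (auto simp: supp2_def Emat_def monom_xy_def split: if_splits)

lemma finite_supp_Emat[simp]: "finite (supp2 (Emat i j))"
  by (rule finite_subset[OF supp_Emat]) auto

lemma rho_Emat: "rho (Emat i j) = (\<lambda>q. if q = (i,j) then 1 else (0::'a::field))"
proof (rule ext, clarify)
  fix a b
  have "rho (Emat i j) (a,b) = (\<Sum>p\<in>{(i,j), (Suc i, Suc j)}. Emat i j p * (ind p (a,b)::'a))"
    by (rule rho_superset[OF _ supp_Emat]) auto
  also have "\<dots> = ind (i,j) (a,b) - ind (Suc i, Suc j) (a,b)"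
    by (simp add: Emat_def monom_xy_def)
  also have "\<dots> = (if (a,b) = (i,j) then 1 else 0)" by (rule ind_E)
  finally show "rho (Emat i j) (a,b) = (if (a,b) = (i,j) then 1 else (0::'a))" .
qed

definition Fsum :: "(nat \<times> nat) set \<Rightarrow> (nat \<times> nat \<Rightarrow> 'a) \<Rightarrow> (nat \<times> nat \<Rightarrow> 'a::field)" where
  "Fsum A c = (\<lambda>p. \<Sum>q\<in>A. c q * Emat (fst q) (snd q) p)"

lemma Fideal_eq: "Fideal = {Fsum A c | A c. finite A}"
  by (simp add: Fideal_def Fsum_def)

lemma Fsum_empty: "Fsum {} c = (\<lambda>p. 0)" by (simp add: Fsum_def)

lemma Fsum_insert: "finite A \<Longrightarrow> x \<notin> A \<Longrightarrow>
  Fsum (insert x A) c = (\<lambda>p. c x * Emat (fst x) (snd x) p + Fsum A c p)"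
  by (simp add: Fsum_def)

lemma finite_supp_Fsum: "finite A \<Longrightarrow> finite (supp2 (Fsum A (c :: _ \<Rightarrow> 'a::field)))"
proof (induction A rule: finite_induct)
  case empty thus ?case by (simp add: Fsum_empty supp2_def)
next
  case (insert x A)
  have sub: "supp2 (Fsum (insert x A) c) \<subseteq> supp2 (Emat (fst x) (snd x) :: _ \<Rightarrow> 'a) \<union> supp2 (Fsum A c)"
    unfolding Fsum_insert[OF insert(1,2)] by (auto simp: supp2_def)
  show ?case by (rule finite_subset[OF sub]) (use insert(3) in auto)
qed

lemma rho_zero: "rho (\<lambda>p. 0) = (\<lambda>q. (0::'a::field))"
  by (rule ext) (auto simp: rho_def supp2_def)

lemma rho_Fsum: "finite A \<Longrightarrow> rho (Fsum A c) = (\<lambda>q. if q \<in> A then c q else 0)"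
proof (induction A rule: finite_induct)
  case empty thus ?case by (simp add: Fsum_empty rho_zero)
next
  case (insert x A)
  have "rho (Fsum (insert x A) c) = (\<lambda>q. rho (\<lambda>p. c x * Emat (fst x) (snd x) p) q + rho (Fsum A c) q)"
    unfolding Fsum_insert[OF insert(1,2)]
    by (rule rho_add) (auto intro: finite_subset[OF supp2_smult] finite_supp_Fsum insert(1))
  also have "\<dots> = (\<lambda>q. c x * (if q = x then 1 else 0) + (if q \<in> A then c q else 0))"
    by (simp add: rho_smult rho_Emat insert(3))
  also have "\<dots> = (\<lambda>q. if q \<in> insert x A then c q else 0)"
    using insert(2) by auto
  finally show ?case .
qed

lemma rho_scal: "rho (scal c) = (\<lambda>q. c * idmat q)"
proof (rule ext, clarify)
  fix a b
  have "rho (scal c) (a,b) = (\<Sum>p\<in>{(0,0)}. scal c p * ind p (a,b))"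
    by (rule rho_superset) (auto simp: supp2_def scal_apply split: if_splits)
  also have "\<dots> = c * idmat (a,b)" by (simp add: ind_ij idmat_def)
  finally show "rho (scal c) (a,b) = c * idmat (a,b)" .
qed

lemma rho_one: "rho (monom_xy 0 0) = idmat"
  by (simp add: monom00_scal rho_scal)

lemma finite_supp_one[simp]: "finite (supp2 (monom_xy 0 0))"
  by (simp add: monom00_scal)

lemma carrier_onePlusF: "carrier onePlusF = {(\<lambda>p. monom_xy 0 0 p + f p) | f. f \<in> Fideal}"
  by (simp add: onePlusF_def)
lemma mult_onePlusF[simp]: "mult onePlusF = s1_mult" by (simp add: onePlusF_def S1_def)
lemma one_onePlusF[simp]: "one onePlusF = monom_xy 0 0" by (simp add: onePlusF_def S1_def)

lemma onePlusF_D: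
  assumes "h \<in> carrier onePlusF"
  shows "finite (supp2 h) \<and> finite {q. rho h q \<noteq> idmat q}"
proof -
  from assms obtain A c where A: "finite A" and h: "h = (\<lambda>p. monom_xy 0 0 p + Fsum A c p)"
    unfolding carrier_onePlusF Fideal_eq by auto
  have fs: "finite (supp2 h)"
    unfolding h by (rule finite_subset[OF supp2_add]) (auto intro: finite_supp_Fsum A)
  have "rho h = (\<lambda>q. idmat q + (if q \<in> A then c q else 0))"
    unfolding h by (simp add: rho_add finite_supp_Fsum A rho_one rho_Fsum)
  hence "{q. rho h q \<noteq> idmat q} \<subseteq> A" by auto
  with A fs show ?thesis by (auto intro: finite_subset)
qed

lemma onePlusF_I:
  fixes h :: "nat \<times> nat \<Rightarrow> 'a::field"
  assumes fs: "finite (supp2 h)" and fin: "finite {q. rho h q \<noteq> idmat q}"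
  shows "h \<in> carrier onePlusF"
proof -
  let ?S = "{q. rho h q \<noteq> idmat q}"
  let ?c = "\<lambda>q. rho h q - idmat q"
  let ?h = "\<lambda>p. monom_xy 0 0 p + Fsum ?S ?c p"
  have "rho ?h = (\<lambda>q. idmat q + (if q \<in> ?S then ?c q else 0))"
    by (simp add: rho_add finite_supp_Fsum fin rho_one rho_Fsum)
  also have "\<dots> = rho h" by (rule ext) auto
  finally have eq: "rho ?h = rho h" .
  have fh: "finite (supp2 ?h)"
    by (rule finite_subset[OF supp2_add]) (auto intro: finite_supp_Fsum fin)
  have "?h = h" by (rule rho_inj[OF fh fs eq])
  moreover have "?h \<in> carrier onePlusF"
    unfolding carrier_onePlusF Fideal_eq using fin by blast
  ultimately show ?thesis by simp
qed

lemma onePlusF_iff: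
  "finite (supp2 h) \<Longrightarrow> h \<in> carrier onePlusF \<longleftrightarrow> finite {q. rho h q \<noteq> idmat q}"
  using onePlusF_D onePlusF_I by blast

lemma onePlusF_sub: "carrier onePlusF \<subseteq> carrier S1"
  using onePlusF_D by (auto simp: carrier_S1)

lemma bound_finite_pairs:
  assumes "finite (S :: (nat \<times> nat) set)"
  obtains K where "\<And>q. q \<in> S \<Longrightarrow> fst q < K \<and> snd q < K"
proof -
  let ?K = "Suc (\<Sum>q\<in>S. fst q + snd q)"
  have "\<And>q. q \<in> S \<Longrightarrow> fst q + snd q \<le> (\<Sum>q\<in>S. fst q + snd q)"
    by (rule member_le_sum) (use assms in auto)
  hence "\<And>q. q \<in> S \<Longrightarrow> fst q < ?K \<and> snd q < ?K" by fastforce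
  thus ?thesis by (rule that)
qed

lemma idmat_apply: "idmat (a,b) = (if a = b then 1 else 0)" by (simp add: idmat_def)

lemma matmult_perturb:
  fixes H1 H2 :: "nat \<times> nat \<Rightarrow> 'a::field"
  assumes f1: "finite {q. H1 q \<noteq> idmat q}" and f2: "finite {q. H2 q \<noteq> idmat q}"
  shows "finite {q. matmult H1 H2 q \<noteq> idmat q}"
proof -
  obtain K1 where K1: "\<And>q. q \<in> {q. H1 q \<noteq> idmat q} \<Longrightarrow> fst q < K1 \<and> snd q < K1"
    using bound_finite_pairs[OF f1] by blast
  obtain K2 where K2: "\<And>q. q \<in> {q. H2 q \<noteq> idmat q} \<Longrightarrow> fst q < K2 \<and> snd q < K2"
    using bound_finite_pairs[OF f2] by blast
  let ?K = "K1 + K2"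
  have "{q. matmult H1 H2 q \<noteq> idmat q} \<subseteq> {..<?K} \<times> {..<?K}"
  proof (rule subsetI)
    fix q assume "q \<in> {q. matmult H1 H2 q \<noteq> idmat q}"
    then obtain a c where q: "q = (a,c)" and ne: "matmult H1 H2 (a,c) \<noteq> idmat (a,c)"
      by (cases q) auto
    have rowfin: "\<And>j. H1 (a,j) \<noteq> 0 \<Longrightarrow> j \<in> {..a + K1}"
    proof -
      fix j assume "H1 (a,j) \<noteq> 0"
      show "j \<in> {..a + K1}"
      proof (cases "H1 (a,j) = idmat (a,j)")
        case True thus ?thesis using \<open>H1 (a,j) \<noteq> 0\<close> by (auto simp: idmat_apply split: if_splits)
      next
        case False thus ?thesis using K1[of "(a,j)"] by auto
      qed
    qed
    have a: "a < ?K"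
    proof (rule ccontr)
      assume "\<not> a < ?K"
      hence row: "\<And>j. H1 (a,j) = idmat (a,j)" and row2: "\<And>j. H2 (a,j) = idmat (a,j)"
        using K1 K2 by force+
      have "matmult H1 H2 (a,c) = (\<Sum>j\<in>{a}. H1 (a,j) * H2 (j,c))"
        by (rule matmult_superset) (auto simp: row idmat_apply split: if_splits)
      also have "\<dots> = idmat (a,c)" by (simp add: row row2 idmat_apply)
      finally show False using ne by simp
    qed
    have c: "c < ?K"
    proof (rule ccontr)
      assume "\<not> c < ?K"
      hence col: "\<And>j. H2 (j,c) = idmat (j,c)" and col1: "\<And>j. H1 (j,c) = idmat (j,c)"
        using K1 K2 by force+
      have "matmult H1 H2 (a,c) = (\<Sum>j\<in>{..a + K1}. H1 (a,j) * H2 (j,c))"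
        by (rule matmult_superset) (use rowfin in auto)
      also have "\<dots> = (\<Sum>j\<in>{..a + K1}. if j = c then H1 (a,j) else 0)"
        by (intro sum.cong refl) (simp add: col idmat_apply)
      also have "\<dots> = (if c \<in> {..a+K1} then H1 (a,c) else 0)" by (simp add: sum.delta')
      also have "\<dots> = idmat (a,c)"
        using rowfin[of c] by (auto simp: col1)
      finally show False using ne by simp
    qed
    show "q \<in> {..<?K} \<times> {..<?K}" using a c q by simp
  qed
  thus ?thesis by (rule finite_subset) auto
qed

lemma onePlusF_mult_closed:
  "h1 \<in> carrier onePlusF \<Longrightarrow> h2 \<in> carrier onePlusF \<Longrightarrow> s1_mult h1 h2 \<in> carrier onePlusF"
  using onePlusF_D[of h1] onePlusF_D[of h2]
  by (auto intro!: onePlusF_I finite_supp_mult simp: rho_mult matmult_perturb)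

lemma one_in_onePlusF: "monom_xy 0 0 \<in> carrier onePlusF"
  by (rule onePlusF_I) (auto simp: rho_one)

lemma submonoid_onePlusF: "submonoid (carrier onePlusF) (S1 :: (nat \<times> nat \<Rightarrow> 'a::field) monoid)"
  by (rule submonoid.intro) (auto simp: onePlusF_sub onePlusF_mult_closed one_in_onePlusF)

lemma onePlusF_is_S1: "(onePlusF :: (nat \<times> nat \<Rightarrow> 'a::field) monoid) = S1\<lparr>carrier := carrier onePlusF\<rparr>"
  by (simp add: onePlusF_def)

lemma monoid_onePlusF: "monoid (onePlusF :: (nat \<times> nat \<Rightarrow> 'a::field) monoid)"
  using submonoid.submonoid_is_monoid[OF submonoid_onePlusF monoid_S1] onePlusF_is_S1 by metis


section \<open>Degrees, tails and the Laurent symbol\<close>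

definition deg :: "nat \<times> nat \<Rightarrow> int" where "deg p = int (fst p) - int (snd p)"

definition pi :: "(nat \<times> nat \<Rightarrow> 'a::field) \<Rightarrow> int \<Rightarrow> 'a" where
  "pi f d = (\<Sum>p\<in>supp2 f. if deg p = d then f p else 0)"

definition Wb :: "(nat \<times> nat \<Rightarrow> 'a::field) \<Rightarrow> nat" where
  "Wb f = (\<Sum>p\<in>supp2 f. fst p + snd p)"

lemma Wb_bound: "finite (supp2 f) \<Longrightarrow> p \<in> supp2 f \<Longrightarrow> fst p + snd p \<le> Wb f"
  unfolding Wb_def by (rule member_le_sum) auto

lemma rho_band:
  assumes "finite (supp2 f)" "rho f (a,b) \<noteq> 0"
  shows "\<bar>int a - int b\<bar> \<le> int (Wb f)"
proof -
  from assms obtain p where p: "p \<in> supp2 f" "ind p (a,b) \<noteq> (0::'a)"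
    unfolding rho_def by (auto elim: sum.not_neutral_contains_not_neutral)
  obtain i j where pij: "p = (i,j)" by fastforce
  have "i + j \<le> Wb f" using Wb_bound[OF assms(1) p(1)] pij by simp
  moreover have "i \<le> a" "b = a - i + j" using p(2) pij by (auto simp: ind_nz)
  ultimately show ?thesis by linarith
qed

lemma rho_tail:
  assumes f: "finite (supp2 f)" and a: "Wb f \<le> a" and b: "Wb f \<le> b"
  shows "rho f (a,b) = pi f (int a - int b)"
  unfolding rho_def pi_def split_conv
proof (rule sum.cong[OF refl])
  fix p assume p: "p \<in> supp2 f"
  obtain i j where pij: "p = (i,j)" by fastforce
  have "i + j \<le> Wb f" using Wb_bound[OF f p] pij by simp
  hence "i \<le> a" "j \<le> b" using a b by auto
  hence "(b = a - i + j \<and> i \<le> a) \<longleftrightarrow> deg p = int a - int b"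
    using pij by (auto simp: deg_def)
  thus "f p * ind p (a,b) = (if deg p = int a - int b then f p else 0)"
    using pij by (simp add: ind_ij)
qed

lemma pi_bound:
  assumes "finite (supp2 f)" "pi f e \<noteq> 0"
  shows "\<bar>e\<bar> \<le> int (Wb f) \<and> e \<in> deg ` supp2 f"
proof -
  from assms obtain p where p: "p \<in> supp2 f" "(if deg p = e then f p else 0) \<noteq> 0"
    unfolding pi_def by (auto elim: sum.not_neutral_contains_not_neutral)
  hence dp: "deg p = e" by (auto split: if_splits)
  have "fst p + snd p \<le> Wb f" by (rule Wb_bound[OF assms(1) p(1)])
  thus ?thesis using dp p(1) by (auto simp: deg_def)
qed

lemma deg_mult: "deg (mon_mult p q) = deg p + deg q"
proof -
  obtain i j k l where "p = (i,j)" "q = (k,l)" by fastforce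
  thus ?thesis by (cases "j \<le> k") (auto simp: mon_mult_def deg_def)
qed

lemma pi_superset:
  "finite A \<Longrightarrow> supp2 f \<subseteq> A \<Longrightarrow> pi f d = (\<Sum>p\<in>A. if deg p = d then f p else 0)"
  unfolding pi_def by (auto intro!: sum.mono_neutral_left simp: supp2_def split: if_splits)

lemma pi_mult:
  fixes f g :: "nat \<times> nat \<Rightarrow> 'a::field"
  assumes f: "finite (supp2 f)" and g: "finite (supp2 g)"
  shows "pi (s1_mult f g) d = (\<Sum>e\<in>deg ` supp2 f. pi f e * pi g (d - e))"
proof -
  let ?A = "supp2 f" and ?B = "supp2 g"
  let ?C = "(\<lambda>(p,q). mon_mult p q) ` (?A \<times> ?B)"
  let ?E = "deg ` ?A"
  have fC: "finite ?C" using f g by auto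
  have "pi (s1_mult f g) d = (\<Sum>s\<in>?C. if deg s = d then s1_mult f g s else 0)"
    by (rule pi_superset) (use fC supp_mult in auto)
  also have "\<dots> = (\<Sum>s\<in>?C. (if deg s = d then 1 else 0) * (\<Sum>p\<in>?A. \<Sum>q\<in>?B. if mon_mult p q = s then f p * g q else 0))"
    by (intro sum.cong refl) (simp add: mult_superset[OF f g])
  also have "\<dots> = (\<Sum>p\<in>?A. \<Sum>q\<in>?B. (if deg (mon_mult p q) = d then 1 else 0) * (f p * g q))"
    by (rule collapse) (use f g fC in auto)
  also have "\<dots> = (\<Sum>p\<in>?A. \<Sum>q\<in>?B. if deg p + deg q = d then f p * g q else 0)"
    by (intro sum.cong refl) (simp add: deg_mult)
  finally have L: "pi (s1_mult f g) d = (\<Sum>p\<in>?A. \<Sum>q\<in>?B. if deg p + deg q = d then f p * g q else 0)" .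
  have "(\<Sum>e\<in>?E. pi f e * pi g (d - e))
     = (\<Sum>e\<in>?E. (\<Sum>p\<in>?A. if deg p = e then f p else 0) * (\<Sum>q\<in>?B. if deg q = d - e then g q else 0))"
    by (simp add: pi_def)
  also have "\<dots> = (\<Sum>e\<in>?E. \<Sum>p\<in>?A. \<Sum>q\<in>?B. (if deg p = e then f p else 0) * (if deg q = d - e then g q else 0))"
    unfolding sum_product by (rule refl)
  also have "\<dots> = (\<Sum>p\<in>?A. \<Sum>e\<in>?E. \<Sum>q\<in>?B. (if deg p = e then f p else 0) * (if deg q = d - e then g q else 0))"
    by (rule sum.swap)
  also have "\<dots> = (\<Sum>p\<in>?A. \<Sum>q\<in>?B. \<Sum>e\<in>?E. (if deg p = e then f p else 0) * (if deg q = d - e then g q else 0))"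
    by (intro sum.cong refl, rule sum.swap)
  also have "\<dots> = (\<Sum>p\<in>?A. \<Sum>q\<in>?B. if deg p + deg q = d then f p * g q else 0)"
  proof (intro sum.cong refl)
    fix p q assume p: "p \<in> ?A"
    have "(\<Sum>e\<in>?E. (if deg p = e then f p else 0) * (if deg q = d - e then g q else 0))
        = (\<Sum>e\<in>?E. if deg p = e then f p * (if deg q = d - e then g q else 0) else 0)"
      by (intro sum.cong refl) simp
    also have "\<dots> = f p * (if deg q = d - deg p then g q else 0)"
      using p f by (simp add: sum.delta)
    also have "\<dots> = (if deg p + deg q = d then f p * g q else 0)" by auto
    finally show "(\<Sum>e\<in>?E. (if deg p = e then f p else 0) * (if deg q = d - e then g q else 0))
        = (if deg p + deg q = d then f p * g q else 0)" .
  qed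
  finally show ?thesis using L by simp
qed

lemma pi_one: "pi (monom_xy 0 0 :: _ \<Rightarrow> 'a::field) d = (if d = 0 then 1 else 0)"
proof -
  have "pi (monom_xy 0 0 :: _ \<Rightarrow> 'a) d = (\<Sum>p\<in>{(0,0)}. if deg p = d then monom_xy 0 0 p else 0)"
    by (rule pi_superset) (auto simp: supp2_def monom_xy_def split: if_splits)
  thus ?thesis by (auto simp: deg_def monom_xy_def)
qed

lemma laurent:
  fixes \<alpha> \<beta> :: "int \<Rightarrow> 'a::field"
  assumes fa: "finite {e. \<alpha> e \<noteq> 0}" and fb: "finite {e. \<beta> e \<noteq> 0}"
    and conv: "\<And>d. (\<Sum>e\<in>{e. \<alpha> e \<noteq> 0}. \<alpha> e * \<beta> (d - e)) = (if d = 0 then 1 else 0)"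
  shows "\<exists>k. {e. \<alpha> e \<noteq> 0} = {k} \<and> {e. \<beta> e \<noteq> 0} = {-k}"
proof -
  define Sa where "Sa = {e. \<alpha> e \<noteq> 0}"
  define Sb where "Sb = {e. \<beta> e \<noteq> 0}"
  have fSa: "finite Sa" and fSb: "finite Sb" using fa fb by (simp_all add: Sa_def Sb_def)
  have c0: "(\<Sum>e\<in>Sa. \<alpha> e * \<beta> (0 - e)) = 1" using conv[of 0] by (simp add: Sa_def)
  have neA: "Sa \<noteq> {}" using c0 by auto
  have neB: "Sb \<noteq> {}"
  proof
    assume "Sb = {}"
    hence "\<And>e. \<beta> e = 0" by (auto simp: Sb_def)
    thus False using c0 by simp
  qed
  define ta where "ta = Max Sa"
  define tb where "tb = Max Sb"
  define sa where "sa = Min Sa"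
  define sb where "sb = Min Sb"
  have ta: "ta \<in> Sa" "\<And>e. e \<in> Sa \<Longrightarrow> e \<le> ta" using fSa neA by (simp_all add: ta_def)
  have tb: "tb \<in> Sb" "\<And>e. e \<in> Sb \<Longrightarrow> e \<le> tb" using fSb neB by (simp_all add: tb_def)
  have sa: "sa \<in> Sa" "\<And>e. e \<in> Sa \<Longrightarrow> sa \<le> e" using fSa neA by (simp_all add: sa_def)
  have sb: "sb \<in> Sb" "\<And>e. e \<in> Sb \<Longrightarrow> sb \<le> e" using fSb neB by (simp_all add: sb_def)
  have top: "(\<Sum>e\<in>Sa. \<alpha> e * \<beta> (ta + tb - e)) = \<alpha> ta * \<beta> tb"
  proof -
    have "(\<Sum>e\<in>Sa. \<alpha> e * \<beta> (ta + tb - e)) = \<alpha> ta * \<beta> (ta + tb - ta) + (\<Sum>e\<in>Sa - {ta}. \<alpha> e * \<beta> (ta + tb - e))"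
      by (rule sum.remove[OF fSa ta(1)])
    also have "(\<Sum>e\<in>Sa - {ta}. \<alpha> e * \<beta> (ta + tb - e)) = 0"
    proof (rule sum.neutral, rule ballI)
      fix e assume e: "e \<in> Sa - {ta}"
      hence "e < ta" using ta(2)[of e] by auto
      hence "ta + tb - e \<notin> Sb" using tb(2)[of "ta + tb - e"] by auto
      thus "\<alpha> e * \<beta> (ta + tb - e) = 0" by (simp add: Sb_def)
    qed
    finally show ?thesis by simp
  qed
  have bot: "(\<Sum>e\<in>Sa. \<alpha> e * \<beta> (sa + sb - e)) = \<alpha> sa * \<beta> sb"
  proof -
    have "(\<Sum>e\<in>Sa. \<alpha> e * \<beta> (sa + sb - e)) = \<alpha> sa * \<beta> (sa + sb - sa) + (\<Sum>e\<in>Sa - {sa}. \<alpha> e * \<beta> (sa + sb - e))"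
      by (rule sum.remove[OF fSa sa(1)])
    also have "(\<Sum>e\<in>Sa - {sa}. \<alpha> e * \<beta> (sa + sb - e)) = 0"
    proof (rule sum.neutral, rule ballI)
      fix e assume e: "e \<in> Sa - {sa}"
      hence "sa < e" using sa(2)[of e] by auto
      hence "sa + sb - e \<notin> Sb" using sb(2)[of "sa + sb - e"] by auto
      thus "\<alpha> e * \<beta> (sa + sb - e) = 0" by (simp add: Sb_def)
    qed
    finally show ?thesis by simp
  qed
  have nz1: "\<alpha> ta * \<beta> tb \<noteq> 0" using ta(1) tb(1) by (simp add: Sa_def Sb_def)
  have nz2: "\<alpha> sa * \<beta> sb \<noteq> 0" using sa(1) sb(1) by (simp add: Sa_def Sb_def)
  have "ta + tb = 0"
  proof (rule ccontr)
    assume "ta + tb \<noteq> 0"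
    hence "(\<Sum>e\<in>Sa. \<alpha> e * \<beta> (ta + tb - e)) = 0" using conv[of "ta + tb"] by (simp add: Sa_def)
    thus False using top nz1 by simp
  qed
  moreover have "sa + sb = 0"
  proof (rule ccontr)
    assume "sa + sb \<noteq> 0"
    hence "(\<Sum>e\<in>Sa. \<alpha> e * \<beta> (sa + sb - e)) = 0" using conv[of "sa + sb"] by (simp add: Sa_def)
    thus False using bot nz2 by simp
  qed
  moreover have "sa \<le> ta" "sb \<le> tb" using sa ta sb tb by auto
  ultimately have eq: "sa = ta" "sb = tb" by linarith+
  have "Sa = {ta}" using sa(2) ta eq by fastforce
  moreover have "Sb = {tb}" using sb(2) tb eq by fastforce
  moreover have "tb = - ta" using \<open>ta + tb = 0\<close> by simp
  ultimately show ?thesis by (auto simp: Sa_def Sb_def)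
qed


section \<open>The index argument\<close>

lemma index_zero:
  fixes u v :: "nat \<times> nat \<Rightarrow> 'a::field_char_0"
  assumes fu: "finite (supp2 u)" and fv: "finite (supp2 v)"
    and uv: "s1_mult u v = monom_xy 0 0" and vu: "s1_mult v u = monom_xy 0 0"
    and pu: "\<And>e. pi u e = (if e = k then c else 0)"
    and pv: "\<And>e. pi v e = (if e = -k then c' else 0)"
    and cc: "c * c' = 1" and kpos: "k > 0"
  shows False
proof -
  define W where "W = Wb u + Wb v"
  define U where "U = rho u"
  define V where "V = rho v"
  define M where "M = 2 * W"
  define L where "L = 3 * W + 1"
  have bandU: "\<And>a b. \<bar>int a - int b\<bar> > int W \<Longrightarrow> U (a,b) = 0"
    using rho_band[OF fu] unfolding U_def W_def by force
  have bandV: "\<And>a b. \<bar>int a - int b\<bar> > int W \<Longrightarrow> V (a,b) = 0"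
    using rho_band[OF fv] unfolding V_def W_def by force
  have tailU: "\<And>a b. W \<le> a \<Longrightarrow> W \<le> b \<Longrightarrow> U (a,b) = pi u (int a - int b)"
    unfolding U_def W_def by (rule rho_tail[OF fu]) auto
  have tailV: "\<And>a b. W \<le> a \<Longrightarrow> W \<le> b \<Longrightarrow> V (a,b) = pi v (int a - int b)"
    unfolding V_def W_def by (rule rho_tail[OF fv]) auto
  have c0: "c \<noteq> 0" using cc by auto
  have "pi u k \<noteq> 0" using pu c0 by simp
  hence kW: "k \<le> int W" using pi_bound[OF fu] unfolding W_def by force
  have UV: "matmult U V = idmat" unfolding U_def V_def
    using rho_mult[OF fu fv] uv rho_one by metis
  have VU: "matmult V U = idmat" unfolding U_def V_def
    using rho_mult[OF fv fu] vu rho_one by metis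
  define X where "X = (\<lambda>a b. U (a,b) * V (b,a))"
  have rowU: "(\<Sum>b\<in>{0..<L}. X a b) = 1" if "a < M" for a
  proof -
    have "matmult U V (a,a) = (\<Sum>b\<in>{0..<L}. U (a,b) * V (b,a))"
    proof (rule matmult_superset)
      fix j assume "U (a,j) \<noteq> 0"
      hence "\<bar>int a - int j\<bar> \<le> int W" using bandU by force
      thus "j \<in> {0..<L}" using that unfolding M_def L_def by auto
    qed simp
    thus ?thesis using UV by (simp add: X_def idmat_apply)
  qed
  have rowV: "(\<Sum>a\<in>{0..<L}. X a b) = 1" if "b < M" for b
  proof -
    have "matmult V U (b,b) = (\<Sum>a\<in>{0..<L}. V (b,a) * U (a,b))"
    proof (rule matmult_superset)
      fix j assume "V (b,j) \<noteq> 0"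
      hence "\<bar>int b - int j\<bar> \<le> int W" using bandV by force
      thus "j \<in> {0..<L}" using that unfolding M_def L_def by auto
    qed simp
    thus ?thesis using VU by (simp add: X_def idmat_apply mult.commute)
  qed
  have hML: "M \<le> L" unfolding M_def L_def by simp
  have Sum1: "(\<Sum>a\<in>{0..<M}. \<Sum>b\<in>{0..<L}. X a b) = of_nat M"
    using rowU by simp
  have Sum2: "(\<Sum>b\<in>{0..<M}. \<Sum>a\<in>{0..<L}. X a b) = of_nat M"
    using rowV by simp
  have zero: "X a b = 0" if "a < M" "M \<le> b" for a b
  proof (cases "a < W")
    case True
    hence "\<bar>int a - int b\<bar> > int W" using that unfolding M_def by auto
    thus ?thesis using bandU by (simp add: X_def)
  next
    case False
    hence "U (a,b) = pi u (int a - int b)" using that by (intro tailU) (auto simp: M_def)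
    also have "\<dots> = 0" using pu that kpos by simp
    finally show ?thesis by (simp add: X_def)
  qed
  have pos: "X a b = of_nat (if W \<le> b \<and> int a - int b = k then 1 else 0)" if "b < M" "M \<le> a" for a b
  proof (cases "b < W")
    case True
    hence "\<bar>int a - int b\<bar> > int W" using that unfolding M_def by auto
    thus ?thesis using bandU True by (simp add: X_def)
  next
    case False
    have "U (a,b) = pi u (int a - int b)" using that False by (intro tailU) (auto simp: M_def)
    moreover have "V (b,a) = pi v (int b - int a)" using that False by (intro tailV) (auto simp: M_def)
    ultimately show ?thesis using False pu pv cc by (simp add: X_def)
  qed
  have split1: "(\<Sum>b\<in>{0..<L}. X a b) = (\<Sum>b\<in>{0..<M}. X a b) + (\<Sum>b\<in>{M..<L}. X a b)" for a
    using sum.atLeastLessThan_concat[of 0 M L "X a"] hML by simp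
  have split2: "(\<Sum>a\<in>{0..<L}. X a b) = (\<Sum>a\<in>{0..<M}. X a b) + (\<Sum>a\<in>{M..<L}. X a b)" for b
    using sum.atLeastLessThan_concat[of 0 M L "\<lambda>a. X a b"] hML by simp
  have Z: "(\<Sum>a\<in>{0..<M}. \<Sum>b\<in>{M..<L}. X a b) = 0"
    by (intro sum.neutral ballI) (auto simp: zero)
  define n where "n = (\<Sum>b\<in>{0..<M}. \<Sum>a\<in>{M..<L}. (if W \<le> b \<and> int a - int b = k then 1 else 0) :: nat)"
  have P: "(\<Sum>b\<in>{0..<M}. \<Sum>a\<in>{M..<L}. X a b) = of_nat n"
    unfolding n_def of_nat_sum
    by (intro sum.cong refl) (auto simp: pos simp del: of_nat_eq_0_iff)
  have sw: "(\<Sum>a\<in>{0..<M}. \<Sum>b\<in>{0..<M}. X a b) = (\<Sum>b\<in>{0..<M}. \<Sum>a\<in>{0..<M}. X a b)"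
    by (rule sum.swap)
  have "of_nat M = (\<Sum>a\<in>{0..<M}. \<Sum>b\<in>{0..<M}. X a b) + (\<Sum>a\<in>{0..<M}. \<Sum>b\<in>{M..<L}. X a b)"
    using Sum1 by (simp add: split1 sum.distrib)
  moreover have "of_nat M = (\<Sum>b\<in>{0..<M}. \<Sum>a\<in>{0..<M}. X a b) + (\<Sum>b\<in>{0..<M}. \<Sum>a\<in>{M..<L}. X a b)"
    using Sum2 by (simp add: split2 sum.distrib)
  ultimately have "(of_nat n :: 'a) = 0" using Z P sw by simp
  hence n0: "n = 0" by simp
  define b0 where "b0 = M - nat k"
  have b0: "b0 \<in> {0..<M}" "W \<le> b0" "int M - int b0 = k"
    using kpos kW unfolding b0_def M_def by auto
  have "M \<in> {M..<L}" unfolding M_def L_def by auto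
  have "1 \<le> (\<Sum>a\<in>{M..<L}. (if W \<le> b0 \<and> int a - int b0 = k then 1 else 0) :: nat)"
  proof -
    have "(if W \<le> b0 \<and> int M - int b0 = k then 1 else 0 :: nat)
        \<le> (\<Sum>a\<in>{M..<L}. (if W \<le> b0 \<and> int a - int b0 = k then 1 else 0) :: nat)"
      by (rule member_le_sum) (use \<open>M \<in> {M..<L}\<close> in auto)
    thus ?thesis using b0 by simp
  qed
  also have "\<dots> \<le> n" unfolding n_def
    by (rule member_le_sum) (use b0 in auto)
  finally show False using n0 by simp
qed


section \<open>Units of S1\<close>

lemma s1_mult_smult:
  fixes f g :: "nat \<times> nat \<Rightarrow> 'a::field"
  assumes f: "finite (supp2 f)" and g: "finite (supp2 g)"
  shows "s1_mult (\<lambda>p. a * f p) (\<lambda>p. b * g p) = (\<lambda>m. (a * b) * s1_mult f g m)"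
proof (rule ext)
  fix m
  have "s1_mult (\<lambda>p. a * f p) (\<lambda>p. b * g p) m
     = (\<Sum>p\<in>supp2 f. \<Sum>q\<in>supp2 g. if mon_mult p q = m then (a * f p) * (b * g q) else 0)"
    by (rule mult_superset) (use f g in \<open>auto simp: supp2_def\<close>)
  also have "\<dots> = (a * b) * (\<Sum>p\<in>supp2 f. \<Sum>q\<in>supp2 g. if mon_mult p q = m then f p * g q else 0)"
    unfolding sum_distrib_left by (intro sum.cong refl) (auto simp: mult_ac)
  also have "\<dots> = (a * b) * s1_mult f g m"
    by (simp add: mult_superset[OF f g])
  finally show "s1_mult (\<lambda>p. a * f p) (\<lambda>p. b * g p) m = (a * b) * s1_mult f g m" .
qed

lemma pi_smult:
  assumes "finite (supp2 f)"
  shows "pi (\<lambda>p. a * f p) e = a * pi f e"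
proof -
  have "pi (\<lambda>p. a * f p) e = (\<Sum>p\<in>supp2 f. if deg p = e then a * f p else 0)"
    by (rule pi_superset[OF assms]) (auto simp: supp2_def)
  also have "\<dots> = a * pi f e" unfolding pi_def sum_distrib_left by (intro sum.cong refl) auto
  finally show ?thesis .
qed

lemma delta_onePlusF:
  fixes f :: "nat \<times> nat \<Rightarrow> 'a::field"
  assumes f: "finite (supp2 f)" and pf: "\<And>e. pi f e = (if e = 0 then 1 else 0)"
  shows "f \<in> carrier onePlusF"
proof (rule onePlusF_I[OF f])
  define W where "W = Wb f"
  have "{q. rho f q \<noteq> idmat q} \<subseteq> {..<2*W} \<times> {..<2*W}"
  proof (rule subsetI)
    fix q assume "q \<in> {q. rho f q \<noteq> idmat q}"
    then obtain a b where q: "q = (a,b)" and ne: "rho f (a,b) \<noteq> idmat (a,b)" by (cases q) auto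
    have "\<not> (W \<le> a \<and> W \<le> b)"
    proof
      assume "W \<le> a \<and> W \<le> b"
      hence "rho f (a,b) = pi f (int a - int b)" using rho_tail[OF f] unfolding W_def by blast
      thus False using ne pf by (auto simp: idmat_apply)
    qed
    moreover have "\<bar>int a - int b\<bar> \<le> int W"
    proof (cases "rho f (a,b) = 0")
      case True
      hence "idmat (a,b) \<noteq> (0::'a)" using ne by simp
      thus ?thesis by (auto simp: idmat_apply split: if_splits)
    next
      case False thus ?thesis using rho_band[OF f] unfolding W_def by blast
    qed
    ultimately show "q \<in> {..<2*W} \<times> {..<2*W}" using q by auto
  qed
  thus "finite {q. rho f q \<noteq> idmat q}" by (rule finite_subset) auto
qed

lemma Units_S1_D:
  assumes "u \<in> Units (S1 :: (nat \<times> nat \<Rightarrow> 'a::field) monoid)"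
  obtains v where "finite (supp2 u)" "finite (supp2 v)"
    "s1_mult u v = monom_xy 0 0" "s1_mult v u = monom_xy 0 0"
  using assms unfolding Units_def carrier_S1 by auto

lemma unit_decomp:
  fixes u :: "nat \<times> nat \<Rightarrow> 'a::field_char_0"
  assumes "u \<in> Units S1"
  shows "\<exists>c w. c \<noteq> 0 \<and> w \<in> Units onePlusF \<and> u = s1_mult (scal c) w"
proof -
  obtain v where fu: "finite (supp2 u)" and fv: "finite (supp2 v)"
    and uv: "s1_mult u v = monom_xy 0 0" and vu: "s1_mult v u = monom_xy 0 0"
    using Units_S1_D[OF assms] by blast
  define \<alpha> where "\<alpha> = pi u"
  define \<beta> where "\<beta> = pi v"
  have sa: "{e. \<alpha> e \<noteq> 0} \<subseteq> deg ` supp2 u" using pi_bound[OF fu] by (auto simp: \<alpha>_def)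
  have sb: "{e. \<beta> e \<noteq> 0} \<subseteq> deg ` supp2 v" using pi_bound[OF fv] by (auto simp: \<beta>_def)
  have fa: "finite {e. \<alpha> e \<noteq> 0}" by (rule finite_subset[OF sa]) (use fu in auto)
  have fb: "finite {e. \<beta> e \<noteq> 0}" by (rule finite_subset[OF sb]) (use fv in auto)
  have conv: "(\<Sum>e\<in>{e. \<alpha> e \<noteq> 0}. \<alpha> e * \<beta> (d - e)) = (if d = 0 then 1 else 0)" for d
  proof -
    have "(\<Sum>e\<in>{e. \<alpha> e \<noteq> 0}. \<alpha> e * \<beta> (d - e)) = (\<Sum>e\<in>deg ` supp2 u. \<alpha> e * \<beta> (d - e))"
      by (rule sum.mono_neutral_left) (use sa fu in auto)
    also have "\<dots> = pi (s1_mult u v) d" unfolding \<alpha>_def \<beta>_def by (rule pi_mult[OF fu fv, symmetric])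
    also have "\<dots> = (if d = 0 then 1 else 0)" by (simp add: uv pi_one)
    finally show ?thesis .
  qed
  obtain k where k: "{e. \<alpha> e \<noteq> 0} = {k}" "{e. \<beta> e \<noteq> 0} = {-k}"
    using laurent[OF fa fb conv] by blast
  define c where "c = \<alpha> k"
  define c' where "c' = \<beta> (-k)"
  have pu: "pi u e = (if e = k then c else 0)" for e
    using k(1) unfolding c_def \<alpha>_def by (cases "e = k") auto
  have pv: "pi v e = (if e = -k then c' else 0)" for e
    using k(2) unfolding c'_def \<beta>_def by (cases "e = -k") auto
  have cc: "c * c' = 1" using conv[of 0] k(1) by (simp add: c_def c'_def)
  have c0: "c \<noteq> 0" using cc by auto
  have "\<not> k > 0"
  proof
    assume "k > 0"
    show False by (rule index_zero[OF fu fv uv vu pu pv cc \<open>k > 0\<close>])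
  qed
  moreover have "\<not> -k > 0"
  proof
    assume "-k > 0"
    have pu': "pi u e = (if e = - (-k) then c else 0)" for e using pu by simp
    have cc': "c' * c = 1" using cc by (simp add: mult.commute)
    show False by (rule index_zero[OF fv fu vu uv pv pu' cc' \<open>-k > 0\<close>])
  qed
  ultimately have k0: "k = 0" by simp
  define w where "w = (\<lambda>p. inverse c * u p)"
  define w' where "w' = (\<lambda>p. c * v p)"
  have fw: "finite (supp2 w)" unfolding w_def by (rule finite_subset[OF supp2_smult fu])
  have fw': "finite (supp2 w')" unfolding w'_def by (rule finite_subset[OF supp2_smult fv])
  have wF: "w \<in> carrier onePlusF"
    by (rule delta_onePlusF[OF fw]) (simp add: w_def pi_smult[OF fu] pu k0 c0)
  have w'F: "w' \<in> carrier onePlusF"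
  proof (rule delta_onePlusF[OF fw'])
    fix e
    have "c * c' = 1" by (rule cc)
    thus "pi w' e = (if e = 0 then 1 else 0)" by (simp add: w'_def pi_smult[OF fv] pv k0)
  qed
  have "s1_mult w w' = (\<lambda>m. (inverse c * c) * s1_mult u v m)"
    unfolding w_def w'_def by (rule s1_mult_smult[OF fu fv])
  hence ww': "s1_mult w w' = monom_xy 0 0" using c0 uv by simp
  have "s1_mult w' w = (\<lambda>m. (c * inverse c) * s1_mult v u m)"
    unfolding w_def w'_def by (rule s1_mult_smult[OF fv fu])
  hence w'w: "s1_mult w' w = monom_xy 0 0" using c0 vu by simp
  have wU: "w \<in> Units onePlusF"
    unfolding Units_def using wF w'F ww' w'w by auto
  have "s1_mult (scal c) w = (\<lambda>p. c * w p)" by (rule scal_mult[OF fw])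
  also have "\<dots> = u" using c0 by (simp add: w_def mult.assoc[symmetric])
  finally have "u = s1_mult (scal c) w" by simp
  thus ?thesis using c0 wU by blast
qed


lemma one_left: "finite (supp2 x) \<Longrightarrow> s1_mult (monom_xy 0 0) x = x"
  by (simp add: monom00_scal scal_mult)
lemma one_right: "finite (supp2 x) \<Longrightarrow> s1_mult x (monom_xy 0 0) = x"
  by (simp add: monom00_scal mult_scal)

lemma cancel_left:
  assumes "finite (supp2 x)" "finite (supp2 y)" "finite (supp2 X)" "s1_mult y x = monom_xy 0 0"
  shows "s1_mult y (s1_mult x X) = X"
proof -
  have "s1_mult y (s1_mult x X) = s1_mult (s1_mult y x) X" using s1_assoc[of y x X] assms by simp
  also have "\<dots> = X" using assms by (simp add: one_left)
  finally show ?thesis .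
qed

lemma UF_sub: "Units onePlusF \<subseteq> Units (S1 :: (nat \<times> nat \<Rightarrow> 'a::field) monoid)"
  using onePlusF_sub unfolding Units_def by auto

lemma Units_S1_inv:
  assumes "u \<in> Units (S1 :: (nat \<times> nat \<Rightarrow> 'a::field) monoid)"
  shows "finite (supp2 u)" "finite (supp2 (inv\<^bsub>S1\<^esub> u))" "s1_mult u (inv\<^bsub>S1\<^esub> u) = monom_xy 0 0"
    "s1_mult (inv\<^bsub>S1\<^esub> u) u = monom_xy 0 0" "inv\<^bsub>S1\<^esub> u \<in> Units S1"
  using S1m.Units_r_inv[OF assms] S1m.Units_l_inv[OF assms] S1m.Units_inv_closed[OF assms]
    S1m.Units_inv_Units[OF assms] S1m.Units_closed[OF assms] by (simp_all add: carrier_S1)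

lemma inv_S1_eq:
  fixes u v :: "nat \<times> nat \<Rightarrow> 'a::field"
  assumes "finite (supp2 u)" "finite (supp2 v)" "s1_mult u v = monom_xy 0 0" "s1_mult v u = monom_xy 0 0"
  shows "inv\<^bsub>S1\<^esub> u = v"
proof -
  have "v = inv\<^bsub>S1\<^esub> u" by (rule S1m.inv_unique') (use assms in \<open>simp_all add: carrier_S1\<close>)
  thus ?thesis by simp
qed

lemma scal_scal: "s1_mult (scal c) (scal d) = scal (c * d)"
  by (rule ext) (simp add: scal_mult scal_apply)

lemma scal_Units: "c \<noteq> 0 \<Longrightarrow> scal c \<in> Units (S1 :: (nat \<times> nat \<Rightarrow> 'a::field) monoid)"
  unfolding Units_def
  by (auto simp: carrier_S1 scal_scal monom00_scal intro!: exI[of _ "scal (inverse c)"])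

lemma smult_eq_scal: "(\<lambda>p. c * monom_xy 0 0 p) = scal c"
  by (rule ext) (simp add: scal_apply monom_xy_def)

lemma onePlusF_smult_one:
  fixes u v :: "nat \<times> nat \<Rightarrow> 'a::field"
  assumes u: "u \<in> carrier onePlusF" and v: "v \<in> carrier onePlusF" and uv: "u = (\<lambda>p. c * v p)"
  shows "c = 1"
proof -
  have fu: "finite {q. rho u q \<noteq> idmat q}" and fv: "finite {q. rho v q \<noteq> idmat q}"
    and fsv: "finite (supp2 v)"
    using onePlusF_D[OF u] onePlusF_D[OF v] by auto
  obtain K where K: "\<And>q. q \<in> {q. rho u q \<noteq> idmat q} \<union> {q. rho v q \<noteq> idmat q} \<Longrightarrow> fst q < K \<and> snd q < K"
    using bound_finite_pairs[of "{q. rho u q \<noteq> idmat q} \<union> {q. rho v q \<noteq> idmat q}"] fu fv by blast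
  have "rho u (K,K) = idmat (K,K)" "rho v (K,K) = idmat (K,K)" using K[of "(K,K)"] by auto
  moreover have "rho u (K,K) = c * rho v (K,K)" using uv rho_smult[OF fsv] by simp
  ultimately show ?thesis by (simp add: idmat_apply)
qed

section \<open>Elementary transvections\<close>

definition Tm :: "nat \<Rightarrow> nat \<Rightarrow> 'a \<Rightarrow> (nat \<times> nat \<Rightarrow> 'a::field)" where
  "Tm i j t = (\<lambda>p. monom_xy 0 0 p + t * Emat i j p)"

lemma finite_supp_Tm: "finite (supp2 (Tm i j t))"
  unfolding Tm_def by (rule finite_subset[OF supp2_add]) (auto intro: finite_subset[OF supp2_smult])

lemma rho_Tm: "rho (Tm i j t) = (\<lambda>q. idmat q + (if q = (i,j) then t else (0::'a::field)))"
proof -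
  have f: "finite (supp2 (\<lambda>p. t * Emat i j p :: 'a))" by (rule finite_subset[OF supp2_smult]) simp
  show ?thesis unfolding Tm_def
    by (rule ext) (auto simp: rho_add[OF finite_supp_one f] rho_smult rho_one rho_Emat)
qed

lemma matmult_T_left:
  "matmult (\<lambda>q. idmat q + (if q = (i,j) then t else (0::'a::field))) B (a,b)
   = B (a,b) + (if a = i then t * B (j,b) else 0)"
proof -
  let ?T = "\<lambda>q. idmat q + (if q = (i,j) then t else (0::'a))"
  have "matmult ?T B (a,b) = (\<Sum>c\<in>{a,j}. ?T (a,c) * B (c,b))"
    by (rule matmult_superset) (auto simp: idmat_apply split: if_splits)
  also have "\<dots> = B (a,b) + (if a = i then t * B (j,b) else 0)"
    by (cases "a = j") (auto simp: idmat_apply distrib_right)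
  finally show ?thesis .
qed

lemma matmult_T_right:
  fixes A :: "nat \<times> nat \<Rightarrow> 'a::field"
  assumes S: "finite S" and sup: "\<And>c. A (a,c) \<noteq> 0 \<Longrightarrow> c \<in> S"
  shows "matmult A (\<lambda>q. idmat q + (if q = (i,j) then t else 0)) (a,b)
   = A (a,b) + (if b = j then t * A (a,i) else 0)"
proof -
  let ?S = "insert b (insert i S)"
  have "matmult A (\<lambda>q. idmat q + (if q = (i,j) then t else 0)) (a,b)
      = (\<Sum>c\<in>?S. A (a,c) * (idmat (c,b) + (if (c,b) = (i,j) then t else 0)))"
    by (rule matmult_superset) (use S sup in auto)
  also have "\<dots> = (\<Sum>c\<in>?S. if c = b then A (a,c) else 0) + (\<Sum>c\<in>?S. if c = i then (if b = j then t * A (a,c) else 0) else 0)"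
    unfolding sum.distrib[symmetric] by (intro sum.cong refl) (auto simp: idmat_apply distrib_left)
  also have "\<dots> = A (a,b) + (if b = j then t * A (a,i) else 0)"
    using S by (simp add: sum.delta)
  finally show ?thesis .
qed

lemma Tm_units:
  assumes "i \<noteq> j"
  shows "Tm i j (1::'a::field) \<in> Units onePlusF"
proof -
  have inF: "Tm i j t \<in> carrier onePlusF" for t :: 'a
  proof (rule onePlusF_I[OF finite_supp_Tm])
    have "{q. rho (Tm i j t) q \<noteq> idmat q} \<subseteq> {(i,j)}" by (auto simp: rho_Tm split: if_splits)
    thus "finite {q. rho (Tm i j t) q \<noteq> idmat q}" by (rule finite_subset) auto
  qed
  have prod: "s1_mult (Tm i j s) (Tm i j t) = monom_xy 0 0" if "s + t = 0" for s t :: 'a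
  proof (rule rho_inj[OF finite_supp_mult[OF finite_supp_Tm finite_supp_Tm] finite_supp_one])
    show "rho (s1_mult (Tm i j s) (Tm i j t)) = rho (monom_xy 0 0)"
    proof (rule ext, clarify)
      fix a b
      have "rho (s1_mult (Tm i j s) (Tm i j t)) (a,b) = matmult (rho (Tm i j s)) (rho (Tm i j t)) (a,b)"
        by (simp add: rho_mult finite_supp_Tm)
      also have "\<dots> = idmat (a,b)"
        unfolding rho_Tm matmult_T_left using that assms
        by (auto simp: idmat_apply algebra_simps)
      finally show "rho (s1_mult (Tm i j s) (Tm i j t)) (a,b) = rho (monom_xy 0 0) (a,b)"
        by (simp add: rho_one)
    qed
  qed
  show ?thesis unfolding Units_def
    using inF[of 1] inF[of "-1"] prod[of 1 "-1"] prod[of "-1" 1] by auto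
qed

lemma central_scalar:
  fixes z :: "nat \<times> nat \<Rightarrow> 'a::field"
  assumes fz: "finite (supp2 z)"
    and comm: "\<And>i j. i \<noteq> j \<Longrightarrow> s1_mult z (Tm i j 1) = s1_mult (Tm i j 1) z"
  shows "z = scal (rho z (0,0))"
proof -
  let ?Z = "rho z"
  have key: "?Z (a,b) + (if b = j then 1 * ?Z (a,i) else 0) = ?Z (a,b) + (if a = i then 1 * ?Z (j,b) else 0)"
    if "i \<noteq> j" for i j a b
  proof -
    have "rho (s1_mult z (Tm i j 1)) (a,b) = rho (s1_mult (Tm i j 1) z) (a,b)" using comm[OF that] by simp
    hence eq: "matmult ?Z (rho (Tm i j 1)) (a,b) = matmult (rho (Tm i j 1)) ?Z (a,b)"
      by (simp add: rho_mult fz finite_supp_Tm)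
    have "matmult ?Z (rho (Tm i j 1)) (a,b) = ?Z (a,b) + (if b = j then 1 * ?Z (a,i) else 0)"
      unfolding rho_Tm by (rule matmult_T_right[of "{..a + (\<Sum>p\<in>supp2 z. snd p)}"]) (auto dest: rho_row[OF fz])
    moreover have "matmult (rho (Tm i j 1)) ?Z (a,b) = ?Z (a,b) + (if a = i then 1 * ?Z (j,b) else 0)"
      unfolding rho_Tm by (rule matmult_T_left)
    ultimately show ?thesis using eq by simp
  qed
  have off: "?Z (a,i) = 0" if "a \<noteq> i" for a i
    using key[of i "Suc i" a "Suc i"] that by simp
  have diag: "?Z (i,i) = ?Z (j,j)" if "i \<noteq> j" for i j
    using key[of i j i j] that by simp
  have "rho z = rho (scal (?Z (0,0)))"
  proof (rule ext, clarify)
    fix a b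
    show "?Z (a,b) = rho (scal (?Z (0,0))) (a,b)"
    proof (cases "a = b")
      case True
      thus ?thesis using diag[of a 0] by (cases "a = 0") (auto simp: rho_scal idmat_apply)
    next
      case False
      thus ?thesis using off[of a b] by (simp add: rho_scal idmat_apply)
    qed
  qed
  thus ?thesis by (rule rho_inj[OF fz finite_supp_scal])
qed


lemma part1:
  "Units (S1 :: (nat \<times> nat \<Rightarrow> 'a::field_char_0) monoid)
     = Kstar_in_S1 <#>\<^bsub>S1\<^esub> Units (onePlusF :: (nat \<times> nat \<Rightarrow> 'a) monoid)"
proof
  show "Units (S1 :: (nat \<times> nat \<Rightarrow> 'a) monoid) \<subseteq> Kstar_in_S1 <#>\<^bsub>S1\<^esub> Units (onePlusF :: (nat \<times> nat \<Rightarrow> 'a) monoid)"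
  proof
    fix u :: "nat \<times> nat \<Rightarrow> 'a" assume "u \<in> Units S1"
    then obtain c w where "c \<noteq> 0" "w \<in> Units onePlusF" "u = s1_mult (scal c) w"
      using unit_decomp by blast
    thus "u \<in> Kstar_in_S1 <#>\<^bsub>S1\<^esub> Units onePlusF"
      unfolding set_mult_def Kstar_in_S1_def by auto
  qed
next
  show "Kstar_in_S1 <#>\<^bsub>S1\<^esub> Units (onePlusF :: (nat \<times> nat \<Rightarrow> 'a) monoid) \<subseteq> Units (S1 :: (nat \<times> nat \<Rightarrow> 'a) monoid)"
  proof
    fix u :: "nat \<times> nat \<Rightarrow> 'a" assume "u \<in> Kstar_in_S1 <#>\<^bsub>S1\<^esub> Units onePlusF"
    then obtain c w where c: "c \<noteq> 0" and w: "w \<in> Units onePlusF" and u: "u = s1_mult (scal c) w"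
      unfolding set_mult_def Kstar_in_S1_def by auto
    have "scal c \<in> Units S1" using scal_Units[OF c] .
    moreover have "w \<in> Units S1" using w UF_sub by blast
    ultimately have "scal c \<otimes>\<^bsub>S1\<^esub> w \<in> Units S1" by (rule S1m.Units_m_closed)
    thus "u \<in> Units S1" using u by simp
  qed
qed

lemma unit_decomp':
  fixes u :: "nat \<times> nat \<Rightarrow> 'a::field_char_0"
  assumes "u \<in> Units S1"
  shows "\<exists>c w. c \<noteq> 0 \<and> w \<in> Units onePlusF \<and> u = (\<lambda>p. c * w p)"
proof -
  obtain c w where "c \<noteq> 0" "w \<in> Units onePlusF" "u = s1_mult (scal c) w"
    using unit_decomp[OF assms] by blast
  moreover have "finite (supp2 w)" using \<open>w \<in> Units onePlusF\<close> onePlusF_D unfolding Units_def by blast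
  ultimately show ?thesis by (auto simp: scal_mult)
qed

lemma smult_Units:
  fixes w :: "nat \<times> nat \<Rightarrow> 'a::field"
  assumes "c \<noteq> 0" "w \<in> Units onePlusF"
  shows "(\<lambda>p. c * w p) \<in> Units S1"
proof -
  have "scal c \<otimes>\<^bsub>S1\<^esub> w \<in> Units S1"
    using S1m.Units_m_closed scal_Units[OF assms(1)] assms(2) UF_sub by blast
  moreover have "finite (supp2 w)" using assms(2) onePlusF_D unfolding Units_def by blast
  ultimately show ?thesis by (simp add: scal_mult)
qed

lemma center_S1:
  "group_center (units_of (S1 :: (nat \<times> nat \<Rightarrow> 'a::field_char_0) monoid)) = Kstar_in_S1"
proof
  show "group_center (units_of S1) \<subseteq> (Kstar_in_S1 :: (nat \<times> nat \<Rightarrow> 'a) set)"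
  proof
    fix z :: "nat \<times> nat \<Rightarrow> 'a" assume "z \<in> group_center (units_of S1)"
    hence zU: "z \<in> Units S1" and comm: "\<And>g. g \<in> Units S1 \<Longrightarrow> s1_mult z g = s1_mult g z"
      unfolding group_center_def units_of_def by auto
    have fz: "finite (supp2 z)" using Units_S1_inv(1)[OF zU] .
    have "z = scal (rho z (0,0))"
      by (rule central_scalar[OF fz]) (use comm Tm_units UF_sub in blast)
    moreover have "rho z (0,0) \<noteq> 0"
    proof
      assume h: "rho z (0,0) = 0"
      have "s1_mult z (inv\<^bsub>S1\<^esub> z) = (\<lambda>p. 0 * (inv\<^bsub>S1\<^esub> z) p)"
        using \<open>z = scal (rho z (0,0))\<close> h scal_mult[OF Units_S1_inv(2)[OF zU], of 0] by simp
      hence "monom_xy 0 0 (0,0) = (0::'a)" using Units_S1_inv(3)[OF zU] by simp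
      thus False by (simp add: monom_xy_def)
    qed
    ultimately show "z \<in> Kstar_in_S1" unfolding Kstar_in_S1_def by blast
  qed
next
  show "Kstar_in_S1 \<subseteq> group_center (units_of (S1 :: (nat \<times> nat \<Rightarrow> 'a) monoid))"
  proof
    fix z :: "nat \<times> nat \<Rightarrow> 'a" assume "z \<in> Kstar_in_S1"
    then obtain c where c: "c \<noteq> 0" and z: "z = scal c" unfolding Kstar_in_S1_def by auto
    have "z \<in> Units S1" using scal_Units[OF c] z by simp
    moreover have "s1_mult z g = s1_mult g z" if "g \<in> Units S1" for g
      using Units_S1_inv(1)[OF that] by (simp add: z scal_mult mult_scal)
    ultimately show "z \<in> group_center (units_of S1)"
      unfolding group_center_def units_of_def by auto
  qed
qed

lemma center_F:
  "group_center (units_of (onePlusF :: (nat \<times> nat \<Rightarrow> 'a::field_char_0) monoid)) = {\<one>\<^bsub>onePlusF\<^esub>}"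
proof
  show "group_center (units_of onePlusF) \<subseteq> {\<one>\<^bsub>(onePlusF :: (nat \<times> nat \<Rightarrow> 'a) monoid)\<^esub>}"
  proof
    fix z :: "nat \<times> nat \<Rightarrow> 'a" assume "z \<in> group_center (units_of onePlusF)"
    hence zU: "z \<in> Units onePlusF" and comm: "\<And>g. g \<in> Units onePlusF \<Longrightarrow> s1_mult z g = s1_mult g z"
      unfolding group_center_def units_of_def by auto
    have zF: "z \<in> carrier onePlusF" using zU unfolding Units_def by blast
    have fz: "finite (supp2 z)" using onePlusF_D[OF zF] by blast
    have zs: "z = scal (rho z (0,0))"
      by (rule central_scalar[OF fz]) (use comm Tm_units in blast)
    hence "z = (\<lambda>p. rho z (0,0) * monom_xy 0 0 p)" using smult_eq_scal by metis
    hence "rho z (0,0) = 1" by (rule onePlusF_smult_one[OF zF one_in_onePlusF])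
    hence "z = monom_xy 0 0" using zs by (simp add: monom00_scal)
    thus "z \<in> {\<one>\<^bsub>onePlusF\<^esub>}" by simp
  qed
next
  have oneU: "monom_xy 0 0 \<in> Units (onePlusF :: (nat \<times> nat \<Rightarrow> 'a) monoid)"
    using monoid.Units_one_closed[OF monoid_onePlusF] by simp
  have "s1_mult (monom_xy 0 0) g = s1_mult g (monom_xy 0 0)" if "g \<in> Units (onePlusF :: (nat \<times> nat \<Rightarrow> 'a) monoid)" for g
  proof -
    have "finite (supp2 g)" using that onePlusF_D unfolding Units_def by blast
    thus ?thesis by (simp add: one_left one_right)
  qed
  thus "{\<one>\<^bsub>onePlusF\<^esub>} \<subseteq> group_center (units_of (onePlusF :: (nat \<times> nat \<Rightarrow> 'a) monoid))"
    using oneU unfolding group_center_def units_of_def by auto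
qed


section \<open>Part (3): inner automorphisms\<close>

lemma UF_D:
  assumes "u \<in> Units (onePlusF :: (nat \<times> nat \<Rightarrow> 'a::field) monoid)"
  shows "u \<in> Units S1" "u \<in> carrier onePlusF"
  using assms UF_sub unfolding Units_def by auto

lemma omega_mult:
  fixes u v :: "nat \<times> nat \<Rightarrow> 'a::field"
  assumes u: "u \<in> Units S1" and v: "v \<in> Units S1"
  shows "omega (s1_mult u v) = (\<lambda>a\<in>carrier S1. omega u (omega v a))"
proof (rule ext)
  fix a
  note U = Units_S1_inv[OF u] and V = Units_S1_inv[OF v]
  show "omega (s1_mult u v) a = (\<lambda>a\<in>carrier S1. omega u (omega v a)) a"
  proof (cases "a \<in> carrier S1")
    case False thus ?thesis by (simp add: omega_def)
  next
    case True
    have fa: "finite (supp2 a)" using True by (simp add: carrier_S1)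
    have inv: "inv\<^bsub>S1\<^esub> (s1_mult u v) = s1_mult (inv\<^bsub>S1\<^esub> v) (inv\<^bsub>S1\<^esub> u)"
    proof (rule inv_S1_eq)
      show "s1_mult (s1_mult u v) (s1_mult (inv\<^bsub>S1\<^esub> v) (inv\<^bsub>S1\<^esub> u)) = monom_xy 0 0"
        using U V by (simp add: s1_assoc finite_supp_mult cancel_left)
      show "s1_mult (s1_mult (inv\<^bsub>S1\<^esub> v) (inv\<^bsub>S1\<^esub> u)) (s1_mult u v) = monom_xy 0 0"
        using U V by (simp add: s1_assoc finite_supp_mult cancel_left)
    qed (use U V in \<open>simp_all add: finite_supp_mult\<close>)
    have "omega v a \<in> carrier S1" using True U V fa by (simp add: omega_def carrier_S1 finite_supp_mult)
    thus ?thesis using True U V fa inv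
      by (simp add: omega_def s1_assoc finite_supp_mult)
  qed
qed

lemma omega_central_factor:
  fixes s w :: "nat \<times> nat \<Rightarrow> 'a::field"
  assumes s: "s \<in> Units S1" and cen: "\<And>x. finite (supp2 x) \<Longrightarrow> s1_mult s x = s1_mult x s"
    and w: "w \<in> Units S1"
  shows "omega (s1_mult s w) = omega w"
proof (rule ext)
  fix a
  note SS = Units_S1_inv[OF s] and W = Units_S1_inv[OF w]
  show "omega (s1_mult s w) a = omega w a"
  proof (cases "a \<in> carrier S1")
    case False thus ?thesis by (simp add: omega_def)
  next
    case True
    have fa: "finite (supp2 a)" using True by (simp add: carrier_S1)
    have inv: "inv\<^bsub>S1\<^esub> (s1_mult s w) = s1_mult (inv\<^bsub>S1\<^esub> w) (inv\<^bsub>S1\<^esub> s)"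
    proof (rule inv_S1_eq)
      show "s1_mult (s1_mult s w) (s1_mult (inv\<^bsub>S1\<^esub> w) (inv\<^bsub>S1\<^esub> s)) = monom_xy 0 0"
        using SS W by (simp add: s1_assoc finite_supp_mult cancel_left)
      show "s1_mult (s1_mult (inv\<^bsub>S1\<^esub> w) (inv\<^bsub>S1\<^esub> s)) (s1_mult s w) = monom_xy 0 0"
        using SS W by (simp add: s1_assoc finite_supp_mult cancel_left)
    qed (use SS W in \<open>simp_all add: finite_supp_mult\<close>)
    define X where "X = s1_mult (s1_mult w a) (inv\<^bsub>S1\<^esub> w)"
    have fX: "finite (supp2 X)" unfolding X_def using W fa by (simp add: finite_supp_mult)
    have "s1_mult (s1_mult (s1_mult s w) a) (inv\<^bsub>S1\<^esub> (s1_mult s w))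
        = s1_mult s (s1_mult X (inv\<^bsub>S1\<^esub> s))"
      unfolding inv X_def using SS W fa by (simp add: s1_assoc finite_supp_mult)
    also have "\<dots> = s1_mult (s1_mult s X) (inv\<^bsub>S1\<^esub> s)" using SS fX by (simp add: s1_assoc)
    also have "\<dots> = s1_mult (s1_mult X s) (inv\<^bsub>S1\<^esub> s)" using cen[OF fX] by simp
    also have "\<dots> = X" using SS fX by (simp add: s1_assoc one_right)
    finally show ?thesis using True by (simp add: omega_def X_def)
  qed
qed

lemma omega_image:
  "omega ` Units (onePlusF :: (nat \<times> nat \<Rightarrow> 'a::field_char_0) monoid) = omega ` Units S1"
proof
  show "omega ` Units onePlusF \<subseteq> omega ` Units (S1 :: (nat \<times> nat \<Rightarrow> 'a) monoid)"
    using UF_sub by blast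
next
  show "omega ` Units (S1 :: (nat \<times> nat \<Rightarrow> 'a) monoid) \<subseteq> omega ` Units onePlusF"
  proof
    fix f assume "f \<in> omega ` Units (S1 :: (nat \<times> nat \<Rightarrow> 'a) monoid)"
    then obtain u where u: "u \<in> Units (S1 :: (nat \<times> nat \<Rightarrow> 'a) monoid)" and f: "f = omega u" by blast
    obtain c w where c: "c \<noteq> 0" and w: "w \<in> Units onePlusF" and uw: "u = s1_mult (scal c) w"
      using unit_decomp[OF u] by blast
    have "omega (s1_mult (scal c) w) = omega w"
      by (rule omega_central_factor[OF scal_Units[OF c]]) (auto simp: scal_mult mult_scal UF_D[OF w])
    thus "f \<in> omega ` Units onePlusF" using f uw w by blast
  qed
qed

lemma omega_inj: "inj_on omega (Units (onePlusF :: (nat \<times> nat \<Rightarrow> 'a::field) monoid))"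
proof (rule inj_onI)
  fix u v :: "nat \<times> nat \<Rightarrow> 'a"
  assume u: "u \<in> Units onePlusF" and v: "v \<in> Units onePlusF" and eq: "omega u = omega v"
  note U = Units_S1_inv[OF UF_D(1)[OF u]] and V = Units_S1_inv[OF UF_D(1)[OF v]]
  define z where "z = s1_mult (inv\<^bsub>S1\<^esub> v) u"
  have fz: "finite (supp2 z)" unfolding z_def using U V by (simp add: finite_supp_mult)
  have comm: "s1_mult z a = s1_mult a z" if fa: "finite (supp2 a)" for a
  proof -
    have "omega u a = omega v a" using eq by simp
    hence e: "s1_mult (s1_mult u a) (inv\<^bsub>S1\<^esub> u) = s1_mult (s1_mult v a) (inv\<^bsub>S1\<^esub> v)"
      using fa by (simp add: omega_def carrier_S1)
    have "s1_mult u a = s1_mult (s1_mult (s1_mult u a) (inv\<^bsub>S1\<^esub> u)) u"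
      using U fa by (simp add: s1_assoc finite_supp_mult one_right)
    also have "\<dots> = s1_mult (s1_mult (s1_mult v a) (inv\<^bsub>S1\<^esub> v)) u" by (simp only: e)
    finally have e': "s1_mult u a = s1_mult (s1_mult (s1_mult v a) (inv\<^bsub>S1\<^esub> v)) u" .
    have "s1_mult z a = s1_mult (inv\<^bsub>S1\<^esub> v) (s1_mult u a)"
      unfolding z_def using U V fa by (simp add: s1_assoc)
    also have "\<dots> = s1_mult (inv\<^bsub>S1\<^esub> v) (s1_mult (s1_mult (s1_mult v a) (inv\<^bsub>S1\<^esub> v)) u)"
      by (simp only: e')
    also have "\<dots> = s1_mult a z"
      unfolding z_def using U V fa by (simp add: s1_assoc finite_supp_mult cancel_left)
    finally show ?thesis .
  qed
  have zs: "z = scal (rho z (0,0))"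
    by (rule central_scalar[OF fz]) (auto intro: comm finite_supp_Tm)
  have "u = s1_mult v z"
    unfolding z_def using U V by (simp add: cancel_left)
  also have "\<dots> = (\<lambda>p. rho z (0,0) * v p)" by (subst zs) (simp add: mult_scal V)
  finally have uv: "u = (\<lambda>p. rho z (0,0) * v p)" .
  hence "rho z (0,0) = 1" by (rule onePlusF_smult_one[OF UF_D(2)[OF u] UF_D(2)[OF v]])
  thus "u = v" using uv by simp
qed

lemma omega_iso:
  "omega \<in> iso (units_of (onePlusF :: (nat \<times> nat \<Rightarrow> 'a::field_char_0) monoid))
                 (Inn_S1 :: ((nat \<times> nat \<Rightarrow> 'a) \<Rightarrow> (nat \<times> nat \<Rightarrow> 'a)) monoid)"
proof (rule isoI)
  show "omega \<in> hom (units_of (onePlusF :: (nat \<times> nat \<Rightarrow> 'a) monoid)) Inn_S1"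
  proof (rule homI)
    fix x :: "nat \<times> nat \<Rightarrow> 'a" assume "x \<in> carrier (units_of onePlusF)"
    thus "omega x \<in> carrier Inn_S1" using UF_sub by (auto simp: Inn_S1_def units_of_def)
  next
    fix x y :: "nat \<times> nat \<Rightarrow> 'a"
    assume "x \<in> carrier (units_of onePlusF)" "y \<in> carrier (units_of onePlusF)"
    hence "x \<in> Units S1" "y \<in> Units S1" using UF_sub by (auto simp: units_of_def)
    thus "omega (x \<otimes>\<^bsub>units_of onePlusF\<^esub> y) = omega x \<otimes>\<^bsub>Inn_S1\<^esub> omega y"
      by (simp add: units_of_def Inn_S1_def omega_mult)
  qed
next
  show "bij_betw omega (carrier (units_of (onePlusF :: (nat \<times> nat \<Rightarrow> 'a) monoid))) (carrier Inn_S1)"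
    unfolding bij_betw_def using omega_inj omega_image by (simp add: units_of_def Inn_S1_def)
qed

section \<open>The isomorphism (1+F)^* = GL_infinity\<close>

lemma carrier_Minf: "carrier onePlusMinf = {A. finite {p. A p \<noteq> idmat p}}"
  by (simp add: onePlusMinf_def)
lemma mult_Minf[simp]: "mult onePlusMinf = matmult" by (simp add: onePlusMinf_def)
lemma one_Minf[simp]: "one onePlusMinf = idmat" by (simp add: onePlusMinf_def)
lemma carrier_GL: "carrier GL_inf = Units onePlusMinf" by (simp add: GL_inf_def units_of_def)
lemma mult_GL[simp]: "mult GL_inf = matmult" by (simp add: GL_inf_def units_of_def)

lemma rho_Units:
  assumes "w \<in> Units (onePlusF :: (nat \<times> nat \<Rightarrow> 'a::field) monoid)"
  shows "rho w \<in> Units onePlusMinf"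
proof -
  obtain w' where w: "w \<in> carrier onePlusF" and w': "w' \<in> carrier onePlusF"
    and e1: "s1_mult w' w = monom_xy 0 0" and e2: "s1_mult w w' = monom_xy 0 0"
    using assms unfolding Units_def by auto
  note D = onePlusF_D[OF w] onePlusF_D[OF w']
  have "matmult (rho w') (rho w) = idmat" using D e1 by (simp add: rho_mult[symmetric] rho_one)
  moreover have "matmult (rho w) (rho w') = idmat" using D e2 by (simp add: rho_mult[symmetric] rho_one)
  ultimately show ?thesis unfolding Units_def using D by (auto simp: carrier_Minf)
qed

lemma rho_pre:
  fixes A :: "nat \<times> nat \<Rightarrow> 'a::field"
  assumes fin: "finite {q. A q \<noteq> idmat q}"
  shows "\<exists>h\<in>carrier onePlusF. rho h = A"
proof -
  let ?S = "{q. A q \<noteq> idmat q}"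
  let ?c = "\<lambda>q. A q - idmat q"
  let ?h = "\<lambda>p. monom_xy 0 0 p + Fsum ?S ?c p"
  have "rho ?h = (\<lambda>q. idmat q + (if q \<in> ?S then ?c q else 0))"
    by (simp add: rho_add finite_supp_Fsum fin rho_one rho_Fsum)
  also have "\<dots> = A" by (rule ext) auto
  finally have "rho ?h = A" .
  moreover have "?h \<in> carrier onePlusF"
    unfolding carrier_onePlusF Fideal_eq using fin by blast
  ultimately show ?thesis by blast
qed

lemma rho_onto:
  assumes "A \<in> Units (onePlusMinf :: (nat \<times> nat \<Rightarrow> 'a::field) monoid)"
  shows "\<exists>w\<in>Units onePlusF. rho w = A"
proof -
  obtain B where A: "finite {q. A q \<noteq> idmat q}" and B: "finite {q. B q \<noteq> idmat q}"
    and e1: "matmult B A = idmat" and e2: "matmult A B = idmat"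
    using assms unfolding Units_def carrier_Minf by auto
  obtain hA where hA: "hA \<in> carrier onePlusF" "rho hA = A" using rho_pre[OF A] by blast
  obtain hB where hB: "hB \<in> carrier onePlusF" "rho hB = B" using rho_pre[OF B] by blast
  note D = onePlusF_D[OF hA(1)] onePlusF_D[OF hB(1)]
  have "s1_mult hB hA = monom_xy 0 0"
    by (rule rho_inj) (use D hA hB e1 in \<open>simp_all add: finite_supp_mult rho_mult rho_one\<close>)
  moreover have "s1_mult hA hB = monom_xy 0 0"
    by (rule rho_inj) (use D hA hB e2 in \<open>simp_all add: finite_supp_mult rho_mult rho_one\<close>)
  ultimately have "hA \<in> Units onePlusF" unfolding Units_def using hA(1) hB(1) by auto
  thus ?thesis using hA(2) by blast
qed

lemma rho_iso: "rho \<in> iso (units_of (onePlusF :: (nat \<times> nat \<Rightarrow> 'a::field) monoid)) GL_inf"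
proof (rule isoI)
  show "rho \<in> hom (units_of (onePlusF :: (nat \<times> nat \<Rightarrow> 'a) monoid)) GL_inf"
  proof (rule homI)
    fix x :: "nat \<times> nat \<Rightarrow> 'a" assume "x \<in> carrier (units_of onePlusF)"
    thus "rho x \<in> carrier GL_inf" by (simp add: units_of_def carrier_GL rho_Units)
  next
    fix x y :: "nat \<times> nat \<Rightarrow> 'a"
    assume "x \<in> carrier (units_of onePlusF)" "y \<in> carrier (units_of onePlusF)"
    hence "finite (supp2 x)" "finite (supp2 y)"
      using onePlusF_D UF_D(2) by (auto simp: units_of_def)
    thus "rho (x \<otimes>\<^bsub>units_of onePlusF\<^esub> y) = rho x \<otimes>\<^bsub>GL_inf\<^esub> rho y"
      by (simp add: units_of_def rho_mult)
  qed
next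
  have inj: "inj_on rho (Units (onePlusF :: (nat \<times> nat \<Rightarrow> 'a) monoid))"
  proof (rule inj_onI)
    fix x y :: "nat \<times> nat \<Rightarrow> 'a"
    assume "x \<in> Units onePlusF" "y \<in> Units onePlusF" "rho x = rho y"
    thus "x = y" using onePlusF_D[OF UF_D(2)[OF \<open>x \<in> Units onePlusF\<close>]] onePlusF_D[OF UF_D(2)[OF \<open>y \<in> Units onePlusF\<close>]] rho_inj by blast
  qed
  have img: "rho ` Units (onePlusF :: (nat \<times> nat \<Rightarrow> 'a) monoid) = Units onePlusMinf"
    using rho_Units rho_onto by blast
  show "bij_betw rho (carrier (units_of (onePlusF :: (nat \<times> nat \<Rightarrow> 'a) monoid))) (carrier GL_inf)"
    unfolding bij_betw_def using inj img by (simp add: units_of_def carrier_GL)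
qed


lemma pi_onePlusF:
  assumes w: "w \<in> carrier (onePlusF :: (nat \<times> nat \<Rightarrow> 'a::field) monoid)"
  shows "pi w e = (if e = 0 then 1 else 0)"
proof -
  have fs: "finite (supp2 w)" and fin: "finite {q. rho w q \<noteq> idmat q}" using onePlusF_D[OF w] by auto
  obtain K where K: "\<And>q. q \<in> {q. rho w q \<noteq> idmat q} \<Longrightarrow> fst q < K \<and> snd q < K"
    using bound_finite_pairs[OF fin] by blast
  define N where "N = Wb w + K"
  define a where "a = N + nat e"
  define b where "b = N + nat (- e)"
  have ab: "int a - int b = e" unfolding a_def b_def by auto
  have "rho w (a,b) = pi w (int a - int b)" by (rule rho_tail[OF fs]) (auto simp: a_def b_def N_def)
  moreover have "rho w (a,b) = idmat (a,b)" using K[of "(a,b)"] by (auto simp: a_def N_def)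
  moreover have "(a = b) \<longleftrightarrow> e = 0" using ab by auto
  ultimately show ?thesis using ab by (simp add: idmat_apply)
qed

definition hK :: "(nat \<times> nat \<Rightarrow> 'a::field) \<Rightarrow> 'a \<times> (nat \<times> nat \<Rightarrow> 'a)" where
  "hK u = (pi u 0, rho (\<lambda>p. inverse (pi u 0) * u p))"

lemma hK_formula:
  assumes c: "c \<noteq> 0" and w: "w \<in> carrier (onePlusF :: (nat \<times> nat \<Rightarrow> 'a::field) monoid)"
  shows "hK (\<lambda>p. c * w p) = (c, rho w)"
proof -
  have fs: "finite (supp2 w)" using onePlusF_D[OF w] by auto
  have "pi (\<lambda>p. c * w p) 0 = c" using pi_smult[OF fs] pi_onePlusF[OF w] by simp
  moreover have "(\<lambda>p. inverse c * (c * w p)) = w" using c by (simp add: mult.assoc[symmetric])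
  ultimately show ?thesis by (simp add: hK_def)
qed

lemma hK_iso:
  "hK \<in> iso (units_of (S1 :: (nat \<times> nat \<Rightarrow> 'a::field_char_0) monoid))
              ((Kmult :: 'a monoid) \<times>\<times> (GL_inf :: (nat \<times> nat \<Rightarrow> 'a) monoid))"
proof (rule isoI)
  show "hK \<in> hom (units_of (S1 :: (nat \<times> nat \<Rightarrow> 'a) monoid)) (Kmult \<times>\<times> GL_inf)"
  proof (rule homI)
    fix u :: "nat \<times> nat \<Rightarrow> 'a" assume "u \<in> carrier (units_of S1)"
    hence "u \<in> Units S1" by (simp add: units_of_def)
    then obtain c w where c: "c \<noteq> 0" and w: "w \<in> Units onePlusF" and u: "u = (\<lambda>p. c * w p)"
      using unit_decomp'[of u] by blast
    have "hK u = (c, rho w)" using hK_formula[OF c UF_D(2)[OF w]] u by simp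
    thus "hK u \<in> carrier (Kmult \<times>\<times> GL_inf)"
      using c rho_Units[OF w] by (simp add: Kmult_def carrier_GL)
  next
    fix u v :: "nat \<times> nat \<Rightarrow> 'a"
    assume "u \<in> carrier (units_of S1)" "v \<in> carrier (units_of S1)"
    hence uU: "u \<in> Units S1" and vU: "v \<in> Units S1" by (simp_all add: units_of_def)
    obtain c w where c: "c \<noteq> 0" and w: "w \<in> Units onePlusF" and u: "u = (\<lambda>p. c * w p)"
      using unit_decomp'[OF uU] by blast
    obtain c' w' where c': "c' \<noteq> 0" and w': "w' \<in> Units onePlusF" and v: "v = (\<lambda>p. c' * w' p)"
      using unit_decomp'[OF vU] by blast
    have wF: "w \<in> carrier onePlusF" and w'F: "w' \<in> carrier onePlusF" using UF_D w w' by auto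
    have fw: "finite (supp2 w)" and fw': "finite (supp2 w')" using onePlusF_D wF w'F by auto
    have "s1_mult u v = (\<lambda>m. (c * c') * s1_mult w w' m)"
      unfolding u v by (rule s1_mult_smult[OF fw fw'])
    hence "hK (s1_mult u v) = (c * c', rho (s1_mult w w'))"
      using hK_formula[of "c * c'" "s1_mult w w'"] c c' onePlusF_mult_closed[OF wF w'F] by simp
    also have "\<dots> = (c * c', matmult (rho w) (rho w'))" by (simp add: rho_mult fw fw')
    finally show "hK (u \<otimes>\<^bsub>units_of S1\<^esub> v) = hK u \<otimes>\<^bsub>Kmult \<times>\<times> GL_inf\<^esub> hK v"
      using hK_formula[OF c wF] hK_formula[OF c' w'F] u v
      by (simp add: units_of_def Kmult_def)
  qed
next
  have inj: "inj_on hK (Units (S1 :: (nat \<times> nat \<Rightarrow> 'a) monoid))"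
  proof (rule inj_onI)
    fix u v :: "nat \<times> nat \<Rightarrow> 'a"
    assume uU: "u \<in> Units S1" and vU: "v \<in> Units S1" and eq: "hK u = hK v"
    obtain c w where c: "c \<noteq> 0" and w: "w \<in> Units onePlusF" and u: "u = (\<lambda>p. c * w p)"
      using unit_decomp'[OF uU] by blast
    obtain c' w' where c': "c' \<noteq> 0" and w': "w' \<in> Units onePlusF" and v: "v = (\<lambda>p. c' * w' p)"
      using unit_decomp'[OF vU] by blast
    have wF: "w \<in> carrier onePlusF" and w'F: "w' \<in> carrier onePlusF" using UF_D w w' by auto
    have fw: "finite (supp2 w)" and fw': "finite (supp2 w')" using onePlusF_D wF w'F by auto
    have "(c, rho w) = (c', rho w')" using eq hK_formula[OF c wF] hK_formula[OF c' w'F] u v by simp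
    hence "c = c'" "rho w = rho w'" by auto
    hence "w = w'" using rho_inj[OF fw fw'] by simp
    thus "u = v" using u v \<open>c = c'\<close> by simp
  qed
  have img: "hK ` Units (S1 :: (nat \<times> nat \<Rightarrow> 'a) monoid) = carrier (Kmult \<times>\<times> GL_inf)"
  proof
    show "hK ` Units (S1 :: (nat \<times> nat \<Rightarrow> 'a) monoid) \<subseteq> carrier (Kmult \<times>\<times> GL_inf)"
    proof
      fix x assume "x \<in> hK ` Units (S1 :: (nat \<times> nat \<Rightarrow> 'a) monoid)"
      then obtain u where uU: "u \<in> Units (S1 :: (nat \<times> nat \<Rightarrow> 'a) monoid)" and x: "x = hK u" by blast
      obtain c w where c: "c \<noteq> 0" and w: "w \<in> Units onePlusF" and u: "u = (\<lambda>p. c * w p)"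
        using unit_decomp'[OF uU] by blast
      have "x = (c, rho w)" using hK_formula[OF c UF_D(2)[OF w]] u x by simp
      thus "x \<in> carrier (Kmult \<times>\<times> GL_inf)"
        using c rho_Units[OF w] by (simp add: Kmult_def carrier_GL)
    qed
  next
    show "carrier (Kmult \<times>\<times> GL_inf) \<subseteq> hK ` Units (S1 :: (nat \<times> nat \<Rightarrow> 'a) monoid)"
    proof
      fix x assume "x \<in> carrier ((Kmult :: 'a monoid) \<times>\<times> (GL_inf :: (nat \<times> nat \<Rightarrow> 'a) monoid))"
      then obtain c A where x: "x = (c, A)" and c: "c \<noteq> 0" and A: "A \<in> Units onePlusMinf"
        by (auto simp: Kmult_def carrier_GL)
      obtain w where w: "w \<in> Units onePlusF" and wA: "rho w = A" using rho_onto[OF A] by blast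
      have m: "(\<lambda>p. c * w p) \<in> Units S1" by (rule smult_Units[OF c w])
      have e: "x = hK (\<lambda>p. c * w p)" using hK_formula[OF c UF_D(2)[OF w]] wA x by simp
      show "x \<in> hK ` Units (S1 :: (nat \<times> nat \<Rightarrow> 'a) monoid)" by (rule image_eqI[where f=hK and x="\<lambda>p. c * w p", OF e m])
    qed
  qed
  show "bij_betw hK (carrier (units_of (S1 :: (nat \<times> nat \<Rightarrow> 'a) monoid))) (carrier (Kmult \<times>\<times> GL_inf))"
    unfolding bij_betw_def using inj img by (simp add: units_of_def)
qed

theorem theorem4p5:
  shows "Units (S1 :: (nat \<times> nat \<Rightarrow> 'a::field_char_0) monoid)
           = Kstar_in_S1 <#>\<^bsub>S1\<^esub> Units (onePlusF :: (nat \<times> nat \<Rightarrow> 'a) monoid)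
       \<and> units_of (S1 :: (nat \<times> nat \<Rightarrow> 'a) monoid)
           \<cong> (Kmult :: 'a monoid) \<times>\<times> (GL_inf :: (nat \<times> nat \<Rightarrow> 'a) monoid)
       \<and> group_center (units_of (S1 :: (nat \<times> nat \<Rightarrow> 'a) monoid)) = Kstar_in_S1
       \<and> group_center (units_of (onePlusF :: (nat \<times> nat \<Rightarrow> 'a) monoid)) = {\<one>\<^bsub>onePlusF\<^esub>}
       \<and> omega \<in> iso (units_of (onePlusF :: (nat \<times> nat \<Rightarrow> 'a) monoid))
                      (Inn_S1 :: ((nat \<times> nat \<Rightarrow> 'a) \<Rightarrow> (nat \<times> nat \<Rightarrow> 'a)) monoid)
       \<and> (Inn_S1 :: ((nat \<times> nat \<Rightarrow> 'a) \<Rightarrow> (nat \<times> nat \<Rightarrow> 'a)) monoid)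
           \<cong> (GL_inf :: (nat \<times> nat \<Rightarrow> 'a) monoid)"
proof (intro conjI)
  show "Units (S1 :: (nat \<times> nat \<Rightarrow> 'a) monoid)
           = Kstar_in_S1 <#>\<^bsub>S1\<^esub> Units (onePlusF :: (nat \<times> nat \<Rightarrow> 'a) monoid)"
    by (rule part1)
  show "units_of (S1 :: (nat \<times> nat \<Rightarrow> 'a) monoid) \<cong> (Kmult :: 'a monoid) \<times>\<times> (GL_inf :: (nat \<times> nat \<Rightarrow> 'a) monoid)"
    by (rule is_isoI[OF hK_iso])
  show "group_center (units_of (S1 :: (nat \<times> nat \<Rightarrow> 'a) monoid)) = Kstar_in_S1"
    by (rule center_S1)
  show "group_center (units_of (onePlusF :: (nat \<times> nat \<Rightarrow> 'a) monoid)) = {\<one>\<^bsub>onePlusF\<^esub>}"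
    by (rule center_F)
  show "omega \<in> iso (units_of (onePlusF :: (nat \<times> nat \<Rightarrow> 'a) monoid))
                      (Inn_S1 :: ((nat \<times> nat \<Rightarrow> 'a) \<Rightarrow> (nat \<times> nat \<Rightarrow> 'a)) monoid)"
    by (rule omega_iso)
  have grp: "group (units_of (onePlusF :: (nat \<times> nat \<Rightarrow> 'a) monoid))"
    by (rule monoid.units_group[OF monoid_onePlusF])
  have "(Inn_S1 :: ((nat \<times> nat \<Rightarrow> 'a) \<Rightarrow> (nat \<times> nat \<Rightarrow> 'a)) monoid) \<cong> units_of (onePlusF :: (nat \<times> nat \<Rightarrow> 'a) monoid)"
    by (rule group.iso_sym[OF grp is_isoI[OF omega_iso]])
  thus "(Inn_S1 :: ((nat \<times> nat \<Rightarrow> 'a) \<Rightarrow> (nat \<times> nat \<Rightarrow> 'a)) monoid) \<cong> (GL_inf :: (nat \<times> nat \<Rightarrow> 'a) monoid)"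
    using is_isoI[OF rho_iso] by (rule iso_trans)
qed

end
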